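(* Let $\hat H_0$ and $\hat V$ be Hermitian operators on a finite-dimensional Hilbert space, let $\hat\rho(0)$ be a density matrix, let $\hat O$ be a Hermitian observable, and fix a time $t\ge 0$. Let $\{\mathcal D_\theta\}_{\theta\ge 0}$ be a mitigable family of probability distributions for a real random variable $\delta$. For $\theta\ge0$ set $$\hat\rho_\theta(t)=\mathbb E_{\theta}\!\left[e^{-it(\hat H_0+\delta\hat V)}\hat\rho(0)e^{it(\hat H_0+\delta\hat V)}\right],$$ where $\mathbb E_\theta$ denotes expectation over $\delta\sim\mathcal D_\theta$. Let $0\le\theta_0<\theta_1<\dots<\theta_r$ be $r+1$ distinct noise strengths, and suppose that for each $i$ one has a noisy estimator $\tilde E_{\theta_i,t}=\mathrm{Tr}(\hat O\hat\rho_{\theta_i}(t))+\xi_i$, where the projection noise $\xi_i$ is normally distributed with mean $0$ and variance $\nu_i^2$. Define the Richardson extrapolator $\tilde E_{0,t}=\sum_{i=0}^r\gamma_i\tilde E_{\theta_i,t}$ with $\gamma_i=\prod_{k\neq i}\frac{\theta_k}{\theta_k-\theta_i}$. Then, for $\epsilon\in(0,1)$, with probability $1-\epsilon$, $$\big|\tilde E_{0,t}-\mathrm{Tr}(\hat O\hat\rho_0(t))\big|\le\sum_{i=0}^r|\gamma_i|\Big(|R_{r+1}(\mathcal D_{\theta_i},t,\hat V)|+c_i\Big),$$ where $c_i=\sqrt2\,\nu_i\,\mathrm{erf}^{-1}(1-\epsilon)$ and the remainder satisfies $$|R_{r+1}(\mathcal D_{\theta_i},t,\hat V)|\le\|\hat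 O\|_\infty\frac{(2t)^{r+1}\|\hat V\|_\infty^{r+1}\,\mathbb E_{\theta_i}\big[|\delta^{r+1}|\big]}{(r+1)!}.$$
   Context: A family $\{\mathcal D_\theta\}_{\theta\ge0}$ of distributions of a real random variable $\delta$ is called mitigable (with respect to $\theta$) if $\theta=0$ corresponds to $\delta=0$ with probability one, and for every positive integer $k$ the moment $\mathbb E_\theta[\delta^k]=\int\delta^k\mathcal D_\theta(\delta)\,d\delta$ is a polynomial $p_k(\theta)$ in $\theta$ of degree at most $k$. This models shot-to-shot noise: in each repetition of an experiment the Hamiltonian is $\hat H_0+\delta\hat V$ with $\delta$ drawn independently from $\mathcal D_\theta$. $\|\cdot\|_\infty$ denotes the spectral (operator) norm. Interaction picture: $\hat U_0(s)=e^{-i\hat H_0 s}$, $\hat A_I(s)=\hat U_0(s)^\dagger\hat A\hat U_0(s)$. For $k\ge1$ let $$a_k=(-i)^k\int_0^t dt_1\int_0^{t_1}dt_2\cdots\int_0^{t_{k-1}}dt_k\,\mathrm{Tr}\Big(\hat O_I(t)[\hat V_I(t_1),[\hat V_I(t_2),[\dots,[\hat V_I(t_k),\hat\rho(0)]\dots]]]\Big),$$ and $a_0=\mathrm{Tr}(\hat O\,\hat U_0(t)\hat\rho(0)\hat U_0(t)^\dagger)$. The remainder is $R_{r+1}(\mathcal D_\theta,t,\hat V)=\mathrm{Tr}(\hat O\hat\rho_\theta(t))-\sum_{k=0}^{r}\mathbb E_\theta[\delta^k]a_k$ (the expectation over $\mathcal D_\theta$ of the $(r+1)$-st order remainder of the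 Dyson series of $\mathrm{Tr}(\hat O\,e^{-it(\hat H_0+\delta\hat V)}\hat\rho(0)e^{it(\hat H_0+\delta\hat V)})$ in powers of $\delta$). *)

theory Defs
  imports "HOL-Probability.Probability" "HOL-Computational_Algebra.Polynomial"
begin

text \<open>Operators on a finite-dimensional Hilbert space C^n are complex n x n matrices,
  with the dimension given by a finite index type 'n.\<close>

definition cmat_scale :: "complex \<Rightarrow> complex^'n^'n \<Rightarrow> complex^'n^'n" where
  "cmat_scale c A = (\<chi> i j. c * A $ i $ j)"

definition adjoint :: "complex^'n^'n \<Rightarrow> complex^'n^'n" where
  "adjoint A = (\<chi> i j. cnj (A $ j $ i))"

definition hermitian :: "complex^'n^'n \<Rightarrow> bool" where
  "hermitian A \<longleftrightarrow> adjoint A = A"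

definition cinner :: "complex^'n \<Rightarrow> complex^'n \<Rightarrow> complex" where
  "cinner x y = (\<Sum>i\<in>UNIV. cnj (x $ i) * y $ i)"

definition density_matrix :: "complex^'n^'n \<Rightarrow> bool" where
  "density_matrix A \<longleftrightarrow> hermitian A \<and> (\<forall>x. Re (cinner x (A *v x)) \<ge> 0) \<and> trace A = 1"

fun mpow :: "complex^'n^'n \<Rightarrow> nat \<Rightarrow> complex^'n^'n" where
  "mpow A 0 = mat 1"
| "mpow A (Suc k) = A ** mpow A k"

definition mexp :: "complex^'n^'n \<Rightarrow> complex^'n^'n" where
  "mexp A = (\<Sum>k. cmat_scale (of_real (1 / fact k)) (mpow A k))"

definition spec_norm :: "complex^'n^'n \<Rightarrow> real" where
  "spec_norm A = onorm (\<lambda>x. A *v x)"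

definition commutator :: "complex^'n^'n \<Rightarrow> complex^'n^'n \<Rightarrow> complex^'n^'n" where
  "commutator A B = A ** B - B ** A"

definition U0 :: "complex^'n^'n \<Rightarrow> real \<Rightarrow> complex^'n^'n" where
  "U0 H0 s = mexp (cmat_scale (- \<i> * of_real s) H0)"

definition interaction :: "complex^'n^'n \<Rightarrow> complex^'n^'n \<Rightarrow> real \<Rightarrow> complex^'n^'n" where
  "interaction H0 A s = adjoint (U0 H0 s) ** A ** U0 H0 s"

fun nested_comm :: "complex^'n^'n \<Rightarrow> complex^'n^'n \<Rightarrow> complex^'n^'n \<Rightarrow> real list \<Rightarrow> complex^'n^'n" where
  "nested_comm H0 V \<rho> [] = \<rho>"
| "nested_comm H0 V \<rho> (\<tau> # ts) = commutator (interaction H0 V \<tau>) (nested_comm H0 V \<rho> ts)"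

fun simplex_int :: "nat \<Rightarrow> real \<Rightarrow> (real list \<Rightarrow> complex) \<Rightarrow> complex" where
  "simplex_int 0 s f = f []"
| "simplex_int (Suc k) s f = integral {0..s} (\<lambda>\<tau>. simplex_int k \<tau> (\<lambda>ts. f (\<tau> # ts)))"

definition evolve :: "complex^'n^'n \<Rightarrow> complex^'n^'n \<Rightarrow> complex^'n^'n \<Rightarrow> real \<Rightarrow> real \<Rightarrow> complex^'n^'n" where
  "evolve H0 V \<rho> t \<delta> =
     (let U = mexp (cmat_scale (- \<i> * of_real t) (H0 + cmat_scale (of_real \<delta>) V)) in U ** \<rho> ** adjoint U)"

definition dyson_coeff :: "complex^'n^'n \<Rightarrow> complex^'n^'n \<Rightarrow> complex^'n^'n \<Rightarrow> complex^'n^'n \<Rightarrow> real \<Rightarrow> nat \<Rightarrow> complex" where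
  "dyson_coeff H0 V \<rho> Obs t k =
     (if k = 0 then trace (Obs ** U0 H0 t ** \<rho> ** adjoint (U0 H0 t))
      else (- \<i>) ^ k * simplex_int k t (\<lambda>ts. trace (interaction H0 Obs t ** nested_comm H0 V \<rho> ts)))"

definition avg_state :: "real measure \<Rightarrow> complex^'n^'n \<Rightarrow> complex^'n^'n \<Rightarrow> complex^'n^'n \<Rightarrow> real \<Rightarrow> complex^'n^'n" where
  "avg_state D H0 V \<rho> t = (\<chi> i j. integral\<^sup>L D (\<lambda>\<delta>. evolve H0 V \<rho> t \<delta> $ i $ j))"

definition remainder :: "nat \<Rightarrow> real measure \<Rightarrow> complex^'n^'n \<Rightarrow> complex^'n^'n \<Rightarrow> complex^'n^'n \<Rightarrow> complex^'n^'n \<Rightarrow> real \<Rightarrow> complex" where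
  "remainder r D H0 V \<rho> Obs t =
     trace (Obs ** avg_state D H0 V \<rho> t)
     - (\<Sum>k\<le>r. of_real (integral\<^sup>L D (\<lambda>\<delta>. \<delta> ^ k)) * dyson_coeff H0 V \<rho> Obs t k)"

definition mitigable :: "(real \<Rightarrow> real measure) \<Rightarrow> bool" where
  "mitigable D \<longleftrightarrow>
     (\<forall>\<theta>\<ge>0. prob_space (D \<theta>) \<and> sets (D \<theta>) = sets borel) \<and>
     (AE \<delta> in D 0. \<delta> = 0) \<and>
     (\<forall>k\<ge>1. (\<forall>\<theta>\<ge>0. integrable (D \<theta>) (\<lambda>\<delta>. \<delta> ^ k)) \<and>
        (\<exists>p :: real poly. degree p \<le> k \<and> (\<forall>\<theta>\<ge>0. integral\<^sup>L (D \<theta>) (\<lambda>\<delta>. \<delta> ^ k) = poly p \<theta>)))"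

definition erf :: "real \<Rightarrow> real" where
  "erf x = 2 / sqrt pi * (LBINT s=0..x. exp (- (s\<^sup>2)))"

definition erf_inv :: "real \<Rightarrow> real" where
  "erf_inv y = (THE x. erf x = y)"

definition richardson_coeff :: "nat \<Rightarrow> (nat \<Rightarrow> real) \<Rightarrow> nat \<Rightarrow> real" where
  "richardson_coeff r \<theta> i = (\<Prod>k\<in>{0..r} - {i}. \<theta> k / (\<theta> k - \<theta> i))"

end

theory Submission
  imports Defs
begin

lemma bl_mv: "bounded_linear (\<lambda>x. (A::complex^'n^'n) *v x)"
  by simp

lemma mv_scaleR: "((r::real) *\<^sub>R (A::complex^'n^'n)) *v x = r *\<^sub>R (A *v x)"
  by (simp add: vec_eq_iff matrix_vector_mult_def scaleR_sum_right)

lemma mm_mv: "((A::complex^'n^'n) ** B) *v x = A *v (B *v x)"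
  by (simp add: matrix_vector_mul_assoc)

lemma spec_norm_bound: "norm ((A::complex^'n^'n) *v x) \<le> spec_norm A * norm x"
  unfolding spec_norm_def by (rule onorm[OF bl_mv])

lemma spec_norm_nonneg: "spec_norm (A::complex^'n^'n) \<ge> 0"
  unfolding spec_norm_def by (rule onorm_pos_le[OF bl_mv])

lemma spec_norm_eq_0: "spec_norm (A::complex^'n^'n) = 0 \<longleftrightarrow> A = 0"
  unfolding spec_norm_def
  by (subst onorm_eq_0[OF bl_mv]) (metis matrix_eq matrix_vector_mult_0)

lemma spec_norm_triangle: "spec_norm ((A::complex^'n^'n) + B) \<le> spec_norm A + spec_norm B"
proof -
  have e: "((*v) (A + B)) = (\<lambda>x. A *v x + B *v x)" by (rule ext) (simp add: matrix_vector_mult_add_rdistrib)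
  show ?thesis unfolding spec_norm_def e by (rule onorm_triangle[OF bl_mv[of A] bl_mv[of B]])
qed

lemma spec_norm_scaleR: "spec_norm ((r::real) *\<^sub>R (A::complex^'n^'n)) = \<bar>r\<bar> * spec_norm A"
proof -
  have e: "((*v) (r *\<^sub>R A)) = (\<lambda>x. r *\<^sub>R (A *v x))" by (rule ext) (simp add: mv_scaleR)
  show ?thesis unfolding spec_norm_def e by (rule onorm_scaleR[OF bl_mv[of A]])
qed

lemma spec_norm_mult: "spec_norm ((A::complex^'n^'n) ** B) \<le> spec_norm A * spec_norm B"
proof -
  have e: "((*v) (A ** B)) = ((*v) A) o ((*v) B)" by (rule ext) (simp add: mm_mv)
  show ?thesis unfolding spec_norm_def e by (rule onorm_compose[OF bl_mv[of A] bl_mv[of B]])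
qed

lemma spec_norm_one: "spec_norm (mat 1 :: complex^'n^'n) = 1"
proof -
  have e: "((*v) (mat 1 :: complex^'n^'n)) = (\<lambda>x. x)" by (rule ext) simp
  show ?thesis unfolding spec_norm_def e by (rule onorm_id)
qed

lemma mv_axis_nth: "((A::complex^'n^'n) *v axis j 1) $ i = A $ i $ j"
  by (simp add: matrix_vector_mult_def axis_def if_distrib if_distribR cong: if_cong)

lemma norm_axis_c1 [simp]: "norm (axis m (1::complex)) = 1"
  by (simp add: inner_axis' norm_eq_1)

lemma entry_le_spec_norm: "cmod ((A::complex^'n^'n) $ i $ j) \<le> spec_norm A"
proof -
  have "cmod (A $ i $ j) \<le> norm (A *v axis j (1::complex))"
    using Finite_Cartesian_Product.norm_nth_le[where x="A *v axis j (1::complex)" and i=i] by (simp add: mv_axis_nth)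
  also have "\<dots> \<le> spec_norm A * norm (axis j (1::complex))"
    by (rule spec_norm_bound)
  finally show ?thesis by simp
qed

lemma norm_le_sum_vec: "norm (x::complex^'n) \<le> (\<Sum>i\<in>UNIV. cmod (x $ i))"
  by (simp add: norm_vec_def L2_set_le_sum)

lemma spec_norm_le_entries: "spec_norm (A::complex^'n^'n) \<le> (\<Sum>i\<in>UNIV. \<Sum>j\<in>UNIV. cmod (A $ i $ j))"
  unfolding spec_norm_def
proof (rule onorm_le)
  fix x :: "complex^'n"
  have "norm (A *v x) \<le> (\<Sum>i\<in>UNIV. cmod ((A *v x) $ i))" by (rule norm_le_sum_vec)
  also have "\<dots> \<le> (\<Sum>i\<in>UNIV. \<Sum>j\<in>UNIV. cmod (A $ i $ j) * norm x)"
  proof (rule sum_mono)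
    fix i
    have "cmod ((A *v x) $ i) = cmod (\<Sum>j\<in>UNIV. A $ i $ j * x $ j)"
      by (simp add: matrix_vector_mult_def)
    also have "\<dots> \<le> (\<Sum>j\<in>UNIV. cmod (A $ i $ j * x $ j))" by (rule norm_sum)
    also have "\<dots> \<le> (\<Sum>j\<in>UNIV. cmod (A $ i $ j) * norm x)"
      by (rule sum_mono) (simp add: norm_mult, intro mult_left_mono Finite_Cartesian_Product.norm_nth_le norm_ge_zero)
    finally show "cmod ((A *v x) $ i) \<le> (\<Sum>j\<in>UNIV. cmod (A $ i $ j) * norm x)" .
  qed
  finally show "norm (A *v x) \<le> (\<Sum>i\<in>UNIV. \<Sum>j\<in>UNIV. cmod (A $ i $ j)) * norm x"
    by (simp add: sum_distrib_right)
qed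

lemma vecnorm_le_spec: "norm (A::complex^'n^'n) \<le> real CARD('n) * real CARD('n) * spec_norm A"
proof -
  have "norm A \<le> (\<Sum>i\<in>UNIV. norm (A $ i))" by (simp add: norm_vec_def L2_set_le_sum)
  also have "\<dots> \<le> (\<Sum>i\<in>(UNIV::'n set). \<Sum>j\<in>(UNIV::'n set). spec_norm A)"
    by (intro sum_mono order.trans[OF norm_le_sum_vec] entry_le_spec_norm)
  finally show ?thesis by simp
qed

lemma spec_le_vecnorm: "spec_norm (A::complex^'n^'n) \<le> real CARD('n) * real CARD('n) * norm A"
proof -
  have "spec_norm A \<le> (\<Sum>i\<in>(UNIV::'n set). \<Sum>j\<in>(UNIV::'n set). norm A)"
    by (intro order.trans[OF spec_norm_le_entries] sum_mono)
       (rule order.trans[OF Finite_Cartesian_Product.norm_nth_le Finite_Cartesian_Product.norm_nth_le])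
  then show ?thesis by simp
qed

section \<open>Banach algebra of square matrices\<close>

typedef ('n::finite) sqm = "UNIV :: (complex^'n^'n) set" by auto

setup_lifting type_definition_sqm

instantiation sqm :: (finite) ab_group_add
begin
lift_definition zero_sqm :: "'a sqm" is 0 .
lift_definition plus_sqm :: "'a sqm \<Rightarrow> 'a sqm \<Rightarrow> 'a sqm" is "(+)" .
lift_definition minus_sqm :: "'a sqm \<Rightarrow> 'a sqm \<Rightarrow> 'a sqm" is "(-)" .
lift_definition uminus_sqm :: "'a sqm \<Rightarrow> 'a sqm" is uminus .
instance by standard (transfer; simp add: algebra_simps)+
end

instantiation sqm :: (finite) real_vector
begin
lift_definition scaleR_sqm :: "real \<Rightarrow> 'a sqm \<Rightarrow> 'a sqm" is scaleR .
instance by standard (transfer; simp add: scaleR_add_right scaleR_add_left)+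
end

lemma matrix_add_rdistrib': "((B::complex^'n^'n) + C) ** A = B ** A + C ** A"
  by (simp add: matrix_matrix_mult_def vec_eq_iff sum.distrib distrib_right)

lemma mat1_neq0: "(mat 1 :: complex^'n^'n) \<noteq> 0"
proof
  assume "(mat 1 :: complex^'n^'n) = 0"
  then have "(mat 1 :: complex^'n^'n) $ undefined $ undefined = 0" by simp
  then show False by (simp add: mat_def)
qed

lemma scaleR_mm_right: "(A::complex^'n^'n) ** (r *\<^sub>R B) = r *\<^sub>R (A ** B)"
  by (simp add: matrix_matrix_mult_def vec_eq_iff scaleR_sum_right)

lemma scaleR_mm_left: "(r *\<^sub>R (A::complex^'n^'n)) ** B = r *\<^sub>R (A ** B)"
  by (simp add: matrix_matrix_mult_def vec_eq_iff scaleR_sum_right)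

instantiation sqm :: (finite) ring_1
begin
lift_definition times_sqm :: "'a sqm \<Rightarrow> 'a sqm \<Rightarrow> 'a sqm" is "(**)" .
lift_definition one_sqm :: "'a sqm" is "mat 1" .
instance
  by standard (transfer; simp add: matrix_mul_assoc matrix_add_ldistrib matrix_add_rdistrib' mat1_neq0)+
end

instantiation sqm :: (finite) real_normed_algebra_1
begin
lift_definition norm_sqm :: "'a sqm \<Rightarrow> real" is spec_norm .
definition sgn_sqm :: "'a sqm \<Rightarrow> 'a sqm" where "sgn_sqm x = x /\<^sub>R norm x"
definition dist_sqm :: "'a sqm \<Rightarrow> 'a sqm \<Rightarrow> real" where "dist_sqm x y = norm (x - y)"
definition uniformity_sqm :: "('a sqm \<times> 'a sqm) filter" where
  "uniformity_sqm = (INF e\<in>{0<..}. principal {(x, y). dist x y < e})"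
definition open_sqm :: "'a sqm set \<Rightarrow> bool" where
  "open_sqm U = (\<forall>x\<in>U. \<forall>\<^sub>F (x', y) in uniformity. x' = x \<longrightarrow> y \<in> U)"
instance
proof
  fix x y :: "'a sqm" and r :: real
  show "(norm x = 0) = (x = 0)" by transfer (rule spec_norm_eq_0)
  show "norm (x + y) \<le> norm x + norm y" by transfer (rule spec_norm_triangle)
  show "norm (r *\<^sub>R x) = \<bar>r\<bar> * norm x" by transfer (rule spec_norm_scaleR)
  show "norm (x * y) \<le> norm x * norm y" by transfer (rule spec_norm_mult)
  show "r *\<^sub>R x * y = r *\<^sub>R (x * y)" by transfer (rule scaleR_mm_left)
  show "x * r *\<^sub>R y = r *\<^sub>R (x * y)" by transfer (rule scaleR_mm_right)
  show "norm (1::'a sqm) = 1" by transfer (rule spec_norm_one)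
  show "dist x y = norm (x - y)" by (rule dist_sqm_def)
  show "sgn x = x /\<^sub>R norm x" by (rule sgn_sqm_def)
qed (simp_all add: uniformity_sqm_def open_sqm_def)
end

lemma bounded_linear_Rep_sqm: "bounded_linear (Rep_sqm :: 'a::finite sqm \<Rightarrow> _)"
proof (rule bounded_linear_intro[where K="real CARD('a) * real CARD('a)"])
  show "Rep_sqm (x + y) = Rep_sqm x + Rep_sqm y" for x y :: "'a sqm" by transfer simp
  show "Rep_sqm (r *\<^sub>R x) = r *\<^sub>R Rep_sqm x" for r and x :: "'a sqm" by transfer simp
  show "norm (Rep_sqm x) \<le> norm x * (real CARD('a) * real CARD('a))" for x :: "'a sqm"
      using vecnorm_le_spec[of "Rep_sqm x"] by (simp add: norm_sqm.rep_eq algebra_simps)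
qed

lemma bounded_linear_Abs_sqm: "bounded_linear (Abs_sqm :: _ \<Rightarrow> 'a::finite sqm)"
proof (rule bounded_linear_intro[where K="real CARD('a) * real CARD('a)"])
  show "Abs_sqm (x + y) = (Abs_sqm x + Abs_sqm y :: 'a sqm)" for x y by (simp add: plus_sqm.abs_eq)
  show "Abs_sqm (r *\<^sub>R x) = (r *\<^sub>R Abs_sqm x :: 'a sqm)" for r x by (simp add: scaleR_sqm.abs_eq)
  show "norm (Abs_sqm x :: 'a sqm) \<le> norm x * (real CARD('a) * real CARD('a))" for x
      using spec_le_vecnorm[of x] by (simp add: norm_sqm.abs_eq algebra_simps)
qed

instance sqm :: (finite) banach
proof
  fix X :: "nat \<Rightarrow> 'a sqm"
  assume "Cauchy X"
  have "Cauchy (\<lambda>n. Rep_sqm (X n))"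
    by (rule bounded_linear.Cauchy[OF bounded_linear_Rep_sqm \<open>Cauchy X\<close>])
  then obtain L where L: "(\<lambda>n. Rep_sqm (X n)) \<longlonglongrightarrow> L"
    using Cauchy_convergent_iff convergent_def by blast
  have "(\<lambda>n. Abs_sqm (Rep_sqm (X n))) \<longlonglongrightarrow> Abs_sqm L"
    by (rule bounded_linear.tendsto[OF bounded_linear_Abs_sqm L])
  then show "convergent X" by (auto simp: Rep_sqm_inverse convergent_def)
qed


lemma adjoint_nth [simp]: "adjoint A $ i $ j = cnj (A $ j $ i)"
  by (simp add: adjoint_def)

lemma adjoint_mult: "adjoint ((A::complex^'n^'n) ** B) = adjoint B ** adjoint A"
  by (simp add: vec_eq_iff matrix_matrix_mult_def mult.commute)

lemma adjoint_add: "adjoint ((A::complex^'n^'n) + B) = adjoint A + adjoint B"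
  by (simp add: vec_eq_iff)

lemma adjoint_diff: "adjoint ((A::complex^'n^'n) - B) = adjoint A - adjoint B"
  by (simp add: vec_eq_iff)

lemma adjoint_uminus: "adjoint (- (A::complex^'n^'n)) = - adjoint A"
  by (simp add: vec_eq_iff)

lemma adjoint_zero: "adjoint (0::complex^'n^'n) = 0"
  by (simp add: vec_eq_iff)

lemma adjoint_scaleR: "adjoint ((r::real) *\<^sub>R (A::complex^'n^'n)) = r *\<^sub>R adjoint A"
  by (simp add: vec_eq_iff)

lemma adjoint_adjoint: "adjoint (adjoint (A::complex^'n^'n)) = A"
  by (simp add: vec_eq_iff)

lemma adjoint_mat1: "adjoint (mat 1 :: complex^'n^'n) = mat 1"
  by (simp add: vec_eq_iff mat_def)

lemma adjoint_cmat_scale: "adjoint (cmat_scale c (A::complex^'n^'n)) = cmat_scale (cnj c) (adjoint A)"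
  by (simp add: vec_eq_iff cmat_scale_def)

lemma norm_adjoint_le: "norm (adjoint (A::complex^'n^'n)) \<le> real CARD('n) * real CARD('n) * norm A"
proof -
  have "norm (adjoint A) \<le> (\<Sum>i\<in>UNIV. norm (adjoint A $ i))" by (simp add: norm_vec_def L2_set_le_sum)
  also have "\<dots> \<le> (\<Sum>i\<in>(UNIV::'n set). \<Sum>j\<in>(UNIV::'n set). norm A)"
  proof (intro sum_mono order.trans[OF norm_le_sum_vec])
    fix i j :: 'n
    have "cmod (adjoint A $ i $ j) = cmod (A $ j $ i)" by simp
    also have "\<dots> \<le> norm A" by (rule order.trans[OF Finite_Cartesian_Product.norm_nth_le Finite_Cartesian_Product.norm_nth_le])
    finally show "cmod (adjoint A $ i $ j) \<le> norm A" .
  qed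
  finally show ?thesis by simp
qed

lift_definition adj :: "'n::finite sqm \<Rightarrow> 'n sqm" is adjoint .
lift_definition tr :: "'n::finite sqm \<Rightarrow> complex" is trace .

lemma adj_mult: "adj (x * y) = adj y * adj x" by transfer (rule adjoint_mult)
lemma adj_add: "adj (x + y) = adj x + adj y" by transfer (rule adjoint_add)
lemma adj_diff: "adj (x - y) = adj x - adj y" by transfer (rule adjoint_diff)
lemma adj_uminus: "adj (- x) = - adj x" by transfer (rule adjoint_uminus)
lemma adj_zero: "adj 0 = 0" by transfer (rule adjoint_zero)
lemma adj_scaleR: "adj (r *\<^sub>R x) = r *\<^sub>R adj x" by transfer (rule adjoint_scaleR)
lemma adj_adj: "adj (adj x) = x" by transfer (rule adjoint_adjoint)
lemma adj_one: "adj 1 = 1" by transfer (rule adjoint_mat1)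

lemma tr_mult_sym: "tr (x * y) = tr (y * x)" by transfer (rule trace_mul_sym)
lemma tr_add: "tr (x + y) = tr x + tr y" by transfer (rule trace_add)
lemma tr_diff: "tr (x - y) = tr x - tr y" by transfer (rule trace_sub)
lemma tr_scaleR: "tr (r *\<^sub>R x) = r *\<^sub>R tr x"
  by transfer (simp add: trace_def scaleR_sum_right)
lemma tr_zero: "tr 0 = 0" by transfer (simp add: trace_def)

lemma bounded_linear_adj: "bounded_linear (adj :: 'n::finite sqm \<Rightarrow> 'n sqm)"
proof -
  have "bounded_linear (\<lambda>x::'n sqm. Abs_sqm (adjoint (Rep_sqm x)))"
  proof (rule bounded_linear_compose[OF bounded_linear_Abs_sqm])
    show "bounded_linear (\<lambda>x::'n sqm. adjoint (Rep_sqm x))"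
    proof (rule bounded_linear_compose[OF _ bounded_linear_Rep_sqm])
      show "bounded_linear (adjoint :: complex^'n^'n \<Rightarrow> _)"
        by (rule bounded_linear_intro[where K="real CARD('n) * real CARD('n)"])
           (auto simp: adjoint_add adjoint_scaleR intro: order.trans[OF norm_adjoint_le] simp: mult_ac)
    qed
  qed
  moreover have "(\<lambda>x::'n sqm. Abs_sqm (adjoint (Rep_sqm x))) = adj"
    by (rule ext) (simp add: adj_def)
  ultimately show ?thesis by simp
qed

lemma bounded_linear_tr: "bounded_linear (tr :: 'n::finite sqm \<Rightarrow> complex)"
proof -
  have bl: "bounded_linear (trace :: complex^'n^'n \<Rightarrow> complex)"
  proof (rule bounded_linear_intro[where K="real CARD('n)"])
    show "trace (x + y) = trace x + trace y" for x y :: "complex^'n^'n" by (rule trace_add)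
    show "trace (r *\<^sub>R x) = r *\<^sub>R trace x" for r and x :: "complex^'n^'n"
      by (simp add: trace_def scaleR_sum_right)
    show "norm (trace x) \<le> norm x * real CARD('n)" for x :: "complex^'n^'n"
    proof -
      have "norm (trace x) \<le> (\<Sum>i\<in>UNIV. cmod (x $ i $ i))" unfolding trace_def by (rule norm_sum)
      also have "\<dots> \<le> (\<Sum>i\<in>(UNIV::'n set). norm x)"
        by (intro sum_mono order.trans[OF Finite_Cartesian_Product.norm_nth_le Finite_Cartesian_Product.norm_nth_le])
      finally show ?thesis by (simp add: mult.commute)
    qed
  qed
  have "bounded_linear (\<lambda>x::'n sqm. trace (Rep_sqm x))"
    by (rule bounded_linear_compose[OF bl bounded_linear_Rep_sqm])
  moreover have "(\<lambda>x::'n sqm. trace (Rep_sqm x)) = tr" by (rule ext) (simp add: tr_def)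
  ultimately show ?thesis by simp
qed

lemma adj_power: "adj (x ^ n) = (adj x) ^ n"
  by (induction n) (simp_all add: adj_one adj_mult power_commutes)

lemma adj_exp: "adj (exp x) = exp (adj x)"
proof -
  have "adj (exp x) = (\<Sum>n. adj (x ^ n /\<^sub>R fact n))"
    unfolding exp_def by (rule bounded_linear.suminf[OF bounded_linear_adj summable_exp_generic])
  also have "\<dots> = exp (adj x)" unfolding exp_def by (simp add: adj_scaleR adj_power)
  finally show ?thesis .
qed

section \<open>mexp via the Banach algebra exponential\<close>

lemma Rep_power: "Rep_sqm (x ^ n) = mpow (Rep_sqm x) n"
  by (induction n) (simp_all add: one_sqm.rep_eq times_sqm.rep_eq)

lemma cmat_scale_real: "cmat_scale (of_real r) A = r *\<^sub>R (A::complex^'n^'n)"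
  unfolding cmat_scale_def vec_eq_iff by (simp add: scaleR_conv_of_real[where 'a=complex])

lemma cmat_scale_fact: "cmat_scale (of_real (1 / fact k)) (A::complex^'n^'n) = A /\<^sub>R fact k"
  by (subst cmat_scale_real) (simp add: divide_inverse)

lemma mexp_exp: "mexp A = Rep_sqm (exp (Abs_sqm A))"
proof -
  have "Rep_sqm (exp (Abs_sqm A)) = (\<Sum>n. Rep_sqm (Abs_sqm A ^ n /\<^sub>R fact n))"
    unfolding exp_def by (rule bounded_linear.suminf[OF bounded_linear_Rep_sqm summable_exp_generic])
  also have "\<dots> = mexp A"
    unfolding mexp_def cmat_scale_fact by (simp add: Rep_power scaleR_sqm.rep_eq Abs_sqm_inverse)
  finally show ?thesis by simp
qed

lemma exp_Abs: "exp (Abs_sqm A) = Abs_sqm (mexp A)"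
  by (simp add: mexp_exp Rep_sqm_inverse)


lemma cmat_scale_mm_left: "cmat_scale z (A::complex^'n^'n) ** B = cmat_scale z (A ** B)"
  by (simp add: vec_eq_iff matrix_matrix_mult_def cmat_scale_def sum_distrib_left mult.assoc)

lemma cmat_scale_mm_right: "(A::complex^'n^'n) ** cmat_scale z B = cmat_scale z (A ** B)"
  by (simp add: vec_eq_iff matrix_matrix_mult_def cmat_scale_def sum_distrib_left mult.left_commute)

lift_definition sc :: "complex \<Rightarrow> 'n::finite sqm \<Rightarrow> 'n sqm" is cmat_scale .

lemma sc_mult_left: "sc z X * Y = sc z (X * Y)" by transfer (rule cmat_scale_mm_left)
lemma sc_mult_right: "X * sc z Y = sc z (X * Y)" by transfer (rule cmat_scale_mm_right)
lemma sc_sc: "sc z (sc w X) = sc (z * w) X" by transfer (simp add: cmat_scale_def vec_eq_iff)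
lemma sc_1: "sc 1 X = X" by transfer (simp add: cmat_scale_def vec_eq_iff)
lemma sc_add: "sc z (X + Y) = sc z X + sc z Y" by transfer (simp add: cmat_scale_def vec_eq_iff algebra_simps)
lemma sc_diff: "sc z (X - Y) = sc z X - sc z Y" by transfer (simp add: cmat_scale_def vec_eq_iff algebra_simps)
lemma tr_sc: "tr (sc z X) = z * tr X" by transfer (simp add: cmat_scale_def trace_def sum_distrib_left)

lemma bounded_linear_sc: "bounded_linear (sc z :: 'n::finite sqm \<Rightarrow> _)"
proof -
  have "linear (cmat_scale z :: complex^'n^'n \<Rightarrow> _)"
    by (rule linearI) (simp_all add: cmat_scale_def vec_eq_iff algebra_simps scaleR_conv_of_real)
  then have bl: "bounded_linear (cmat_scale z :: complex^'n^'n \<Rightarrow> _)"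
    by (simp add: linear_conv_bounded_linear)
  have "bounded_linear (\<lambda>X::'n sqm. Abs_sqm (cmat_scale z (Rep_sqm X)))"
    by (intro bounded_linear_compose[OF bounded_linear_Abs_sqm] bounded_linear_compose[OF bl bounded_linear_Rep_sqm])
  moreover have "(\<lambda>X::'n sqm. Abs_sqm (cmat_scale z (Rep_sqm X))) = sc z" by (rule ext) (simp add: sc_def)
  ultimately show ?thesis by simp
qed

lemma bounded_linear_trC: "bounded_linear (\<lambda>X::'n::finite sqm. tr (C * X))"
  using bounded_linear_compose[OF bounded_linear_tr bounded_linear_mult_right[of C]] by simp

lemma continuous_on_sc [continuous_intros]: "continuous_on S f \<Longrightarrow> continuous_on S (\<lambda>x. sc z (f x))"
  using bounded_linear.continuous_on[OF bounded_linear_sc] by blast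

lemma E_inv1: "exp (s *\<^sub>R (- b)) * exp (s *\<^sub>R b) = (1::'a::{real_normed_algebra_1,banach})"
proof -
  have "exp (s *\<^sub>R (- b)) * exp (s *\<^sub>R b) = exp (- (s *\<^sub>R b) + s *\<^sub>R b)"
    by (subst exp_add_commuting) (simp_all add: algebra_simps)
  then show ?thesis by simp
qed

lemma E_inv2: "exp (s *\<^sub>R b) * exp (s *\<^sub>R (- b)) = (1::'a::{real_normed_algebra_1,banach})"
  using E_inv1[of s "-b"] by simp

lemma E_comm: "exp (s *\<^sub>R b) * b = b * exp (s *\<^sub>R (b::'a::{real_normed_algebra_1,banach}))"
  by (rule exp_times_scaleR_commute)

lemma adj_E: "adj b = - b \<Longrightarrow> adj (exp (s *\<^sub>R b)) = exp (s *\<^sub>R (- b))"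
  by (simp add: adj_exp adj_scaleR)

lemma continuous_on_exp_ball: "continuous_on (ball 0 R) (exp :: 'a::{real_normed_algebra_1,banach} \<Rightarrow> 'a)"
proof -
  have ul: "uniform_limit (ball 0 R) (\<lambda>n (x::'a). \<Sum>i<n. x ^ i /\<^sub>R fact i) (\<lambda>x. \<Sum>i. x ^ i /\<^sub>R fact i) sequentially"
  proof (rule Weierstrass_m_test[where f="\<lambda>i x. x ^ i /\<^sub>R fact i" and M="\<lambda>n. R ^ n /\<^sub>R fact n"])
    show "norm ((x::'a) ^ n /\<^sub>R fact n) \<le> R ^ n /\<^sub>R fact n" if "x \<in> ball 0 R" for n x
    proof -
      have "norm (x ^ n /\<^sub>R fact n) = norm (x ^ n) / fact n" by (simp add: divide_inverse_commute)
      also have "\<dots> \<le> norm x ^ n / fact n"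
        by (intro divide_right_mono norm_power_ineq) simp
      also have "\<dots> \<le> R ^ n / fact n"
        using that by (intro divide_right_mono power_mono) auto
      finally show ?thesis by (simp add: divide_inverse_commute)
    qed
    show "summable (\<lambda>n. R ^ n /\<^sub>R fact n)" by (rule summable_exp_generic)
  qed
  have "continuous_on (ball 0 R) (\<lambda>x::'a. \<Sum>i. x ^ i /\<^sub>R fact i)"
    by (rule uniform_limit_theorem[OF _ ul]) (intro always_eventually allI continuous_intros, simp)
  then show ?thesis by (simp add: exp_def)
qed

lemma isCont_exp_gen: "isCont (exp :: 'a::{real_normed_algebra_1,banach} \<Rightarrow> 'a) x"
proof -
  have "x \<in> ball 0 (norm x + 1)" by simp
  then show ?thesis
    using continuous_on_exp_ball[of "norm x + 1"] continuous_on_eq_continuous_at[OF open_ball] by blast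
qed

lemma continuous_on_exp_gen [continuous_intros]:
  "continuous_on S f \<Longrightarrow> continuous_on S (\<lambda>x. exp (f x :: 'a::{real_normed_algebra_1,banach}))"
proof -
  assume f: "continuous_on S f"
  have "continuous_on UNIV (exp :: 'a \<Rightarrow> 'a)" by (rule continuous_at_imp_continuous_on) (simp add: isCont_exp_gen)
  from continuous_on_compose2[OF this f] show ?thesis by auto
qed

section \<open>Interaction picture state and its derivative\<close>

definition PI :: "'n::finite sqm \<Rightarrow> 'n sqm \<Rightarrow> 'n sqm \<Rightarrow> real \<Rightarrow> 'n sqm" where
  "PI b0 b rho s = exp (s *\<^sub>R (- b0)) * exp (s *\<^sub>R b) * rho * exp (s *\<^sub>R (- b)) * exp (s *\<^sub>R b0)"

definition VIf :: "'n::finite sqm \<Rightarrow> 'n sqm \<Rightarrow> real \<Rightarrow> 'n sqm" where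
  "VIf b0 v s = exp (s *\<^sub>R (- b0)) * v * exp (s *\<^sub>R b0)"

lemma PI_0: "PI b0 b rho 0 = rho" by (simp add: PI_def)

lemma PI_cont: "continuous_on S (PI b0 b rho)"
  unfolding PI_def by (intro continuous_intros)

lemma VIf_cont: "continuous_on S (VIf b0 v)"
  unfolding VIf_def by (intro continuous_intros)

lemma PI_deriv:
  assumes b: "b = b0 + sc c v"
  shows "(PI b0 b rho has_vector_derivative
           sc c (VIf b0 v s * PI b0 b rho s - PI b0 b rho s * VIf b0 v s)) (at s within T)"
proof -
  define A where "A = exp (s *\<^sub>R (- b0))"
  define B where "B = exp (s *\<^sub>R b)"
  define C where "C = exp (s *\<^sub>R (- b))"
  define D where "D = exp (s *\<^sub>R b0)"
  have dA: "((\<lambda>s. exp (s *\<^sub>R (- b0))) has_vector_derivative A * (- b0)) (at s within T)"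
    unfolding A_def by (rule exp_scaleR_has_vector_derivative_right)
  have dB: "((\<lambda>s. exp (s *\<^sub>R b)) has_vector_derivative B * b) (at s within T)"
    unfolding B_def by (rule exp_scaleR_has_vector_derivative_right)
  have dC: "((\<lambda>s. exp (s *\<^sub>R (- b))) has_vector_derivative C * (- b)) (at s within T)"
    unfolding C_def by (rule exp_scaleR_has_vector_derivative_right)
  have dD: "((\<lambda>s. exp (s *\<^sub>R b0)) has_vector_derivative D * b0) (at s within T)"
    unfolding D_def by (rule exp_scaleR_has_vector_derivative_right)
  have dR: "((\<lambda>s. rho) has_vector_derivative 0) (at s within T)" by simp
  have d: "(PI b0 b rho has_vector_derivative
      (A * B * rho * C * (D * b0) + ((A * B * rho) * (C * - b) + ((A * B) * 0 + (A * (B * b) + A * - b0 * B) * rho) * C) * D))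
      (at s within T)"
    unfolding PI_def
    using has_vector_derivative_mult[OF has_vector_derivative_mult[OF has_vector_derivative_mult[OF has_vector_derivative_mult[OF dA dB] dR] dC] dD]
    by (simp add: A_def B_def C_def D_def)
  have AD: "D * A = 1" unfolding A_def D_def by (rule E_inv2)
  have cB: "B * b = b * B" unfolding B_def by (rule E_comm)
  have cA: "A * b0 = b0 * A" using E_comm[of s "- b0"] unfolding A_def by simp
  have cD: "D * b0 = b0 * D" unfolding D_def by (rule E_comm)
  have eq: "A * B * rho * C * (D * b0) + ((A * B * rho) * (C * - b) + ((A * B) * 0 + (A * (B * b) + A * - b0 * B) * rho) * C) * D
      = A * (b - b0) * B * rho * C * D - A * B * rho * C * (b - b0) * D"
  proof -
    have "A * B * rho * C * (D * b0) = A * B * rho * C * b0 * D" by (simp add: cD mult.assoc)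
    moreover have "A * (B * b) = A * b * B" by (simp add: cB mult.assoc)
    ultimately show ?thesis by (simp add: algebra_simps)
  qed
  have VP: "VIf b0 v s * PI b0 b rho s = A * v * B * rho * C * D"
  proof -
    have "VIf b0 v s * PI b0 b rho s = A * v * (D * A) * B * rho * C * D"
      by (simp add: VIf_def PI_def A_def B_def C_def D_def mult.assoc)
    then show ?thesis by (simp add: AD)
  qed
  have PV: "PI b0 b rho s * VIf b0 v s = A * B * rho * C * v * D"
  proof -
    have "PI b0 b rho s * VIf b0 v s = A * B * rho * C * (D * A) * v * D"
      by (simp add: VIf_def PI_def A_def B_def C_def D_def mult.assoc)
    then show ?thesis by (simp add: AD)
  qed
  have "A * (b - b0) * B * rho * C * D - A * B * rho * C * (b - b0) * D
      = sc c (VIf b0 v s * PI b0 b rho s - PI b0 b rho s * VIf b0 v s)"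
    unfolding VP PV by (simp add: b sc_mult_left sc_mult_right sc_diff mult.assoc algebra_simps)
  with d eq show ?thesis by simp
qed

section \<open>Iterated commutator integrals\<close>

fun Q :: "(real \<Rightarrow> 'n::finite sqm) \<Rightarrow> nat \<Rightarrow> (real \<Rightarrow> 'n sqm) \<Rightarrow> real \<Rightarrow> 'n sqm" where
  "Q W 0 X s = X s"
| "Q W (Suc k) X s = integral {0..s} (\<lambda>\<tau>. W \<tau> * Q W k X \<tau> - Q W k X \<tau> * W \<tau>)"

lemma Q_cont:
  assumes W: "continuous_on UNIV W" and X: "continuous_on {0..t} X"
  shows "continuous_on {0..t} (Q W k X)"
proof (induction k)
  case 0
  then show ?case using X by simp
next
  case (Suc k)
  have "continuous_on {0..t} (\<lambda>\<tau>. W \<tau> * Q W k X \<tau> - Q W k X \<tau> * W \<tau>)"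
    using Suc continuous_on_subset[OF W] by (intro continuous_intros) auto
  then have "(\<lambda>\<tau>. W \<tau> * Q W k X \<tau> - Q W k X \<tau> * W \<tau>) integrable_on {0..t}"
    by (rule integrable_continuous_real)
  then show ?case by (simp add: indefinite_integral_continuous_1)
qed

lemma integrable_sub:
  fixes f :: "real \<Rightarrow> 'a::banach"
  assumes "continuous_on {0..t} f" "s \<in> {0..t}"
  shows "f integrable_on {0..s}"
  using assms by (intro integrable_continuous_real continuous_on_subset[OF assms(1)]) auto

lemma Q_cong:
  assumes "\<forall>\<tau>\<in>{0..t}. X \<tau> = Y \<tau>" "s \<in> {0..t}"
  shows "Q W k X s = Q W k Y s"
  using assms(2)
proof (induction k arbitrary: s)
  case 0
  then show ?case using assms(1) by simp
next
  case (Suc k)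
  show ?case
    by simp (rule integral_cong, use Suc in auto)
qed

lemma Q_add:
  assumes W: "continuous_on UNIV W" and X: "continuous_on {0..t} X" and Y: "continuous_on {0..t} Y"
  shows "s \<in> {0..t} \<Longrightarrow> Q W k (\<lambda>s. X s + Y s) s = Q W k X s + Q W k Y s"
proof (induction k arbitrary: s)
  case 0
  then show ?case by simp
next
  case (Suc k)
  let ?f = "\<lambda>\<tau>. W \<tau> * Q W k X \<tau> - Q W k X \<tau> * W \<tau>"
  let ?g = "\<lambda>\<tau>. W \<tau> * Q W k Y \<tau> - Q W k Y \<tau> * W \<tau>"
  have cf: "continuous_on {0..t} ?f" "continuous_on {0..t} ?g"
    using Q_cont[OF W X] Q_cont[OF W Y] continuous_on_subset[OF W] by (intro continuous_intros; auto)+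
  have "Q W (Suc k) (\<lambda>s. X s + Y s) s = integral {0..s} (\<lambda>\<tau>. ?f \<tau> + ?g \<tau>)"
    by simp (rule integral_cong, use Suc in \<open>auto simp: algebra_simps\<close>)
  also have "\<dots> = integral {0..s} ?f + integral {0..s} ?g"
    by (rule integral_add; rule integrable_sub[OF _ Suc.prems]; fact)
  finally show ?case by simp
qed

lemma Q_sc:
  assumes W: "continuous_on UNIV W" and X: "continuous_on {0..t} X"
  shows "s \<in> {0..t} \<Longrightarrow> Q W k (\<lambda>s. sc z (X s)) s = sc z (Q W k X s)"
proof (induction k arbitrary: s)
  case 0
  then show ?case by simp
next
  case (Suc k)
  let ?f = "\<lambda>\<tau>. W \<tau> * Q W k X \<tau> - Q W k X \<tau> * W \<tau>"
  have cf: "continuous_on {0..t} ?f"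
    using Q_cont[OF W X] continuous_on_subset[OF W] by (intro continuous_intros; auto)+
  have "Q W (Suc k) (\<lambda>s. sc z (X s)) s = integral {0..s} (sc z \<circ> ?f)"
    by simp (rule integral_cong, use Suc in \<open>auto simp: sc_mult_left sc_mult_right sc_diff\<close>)
  also have "\<dots> = sc z (integral {0..s} ?f)"
    by (rule integral_linear[OF integrable_sub[OF cf Suc.prems] bounded_linear_sc])
  finally show ?case by simp
qed

lemma Q_shift: "Q W k (Q W (Suc 0) X) s = Q W (Suc k) X s"
proof (induction k arbitrary: s)
  case 0
  then show ?case by simp
next
  case (Suc k)
  have "Q W (Suc k) (Q W (Suc 0) X) s = integral {0..s} (\<lambda>\<tau>. W \<tau> * Q W k (Q W (Suc 0) X) \<tau> - Q W k (Q W (Suc 0) X) \<tau> * W \<tau>)"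
    by (rule Q.simps(2))
  also have "\<dots> = integral {0..s} (\<lambda>\<tau>. W \<tau> * Q W (Suc k) X \<tau> - Q W (Suc k) X \<tau> * W \<tau>)"
    by (simp only: Suc.IH)
  also have "\<dots> = Q W (Suc (Suc k)) X s" by (rule Q.simps(2)[symmetric])
  finally show ?case .
qed

lemma expansion:
  assumes W: "continuous_on UNIV W" and P: "continuous_on {0..t} P"
    and duh: "\<And>s. s \<in> {0..t} \<Longrightarrow> P s = rho + sc c (Q W (Suc 0) P s)"
  shows "s \<in> {0..t} \<Longrightarrow> P s = (\<Sum>k\<le>m. sc (c ^ k) (Q W k (\<lambda>_. rho) s)) + sc (c ^ Suc m) (Q W (Suc m) P s)"
proof (induction m arbitrary: s)
  case 0
  then show ?case using duh by (simp add: sc_1)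
next
  case (Suc m)
  have c1: "continuous_on {0..t} (\<lambda>_::real. rho)" by simp
  have c2: "continuous_on {0..t} (\<lambda>s. sc c (Q W (Suc 0) P s))"
    by (intro continuous_intros Q_cont[OF W P])
  have "Q W (Suc m) P s = Q W (Suc m) (\<lambda>s. rho + sc c (Q W (Suc 0) P s)) s"
    by (rule Q_cong[OF _ Suc.prems]) (use duh in auto)
  also have "\<dots> = Q W (Suc m) (\<lambda>_. rho) s + Q W (Suc m) (\<lambda>s. sc c (Q W (Suc 0) P s)) s"
    by (rule Q_add[OF W c1 c2 Suc.prems])
  also have "Q W (Suc m) (\<lambda>s. sc c (Q W (Suc 0) P s)) s = sc c (Q W (Suc m) (Q W (Suc 0) P) s)"
    by (rule Q_sc[OF W Q_cont[OF W P] Suc.prems])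
  also have "Q W (Suc m) (Q W (Suc 0) P) s = Q W (Suc (Suc m)) P s" by (rule Q_shift)
  finally have "Q W (Suc m) P s = Q W (Suc m) (\<lambda>_. rho) s + sc c (Q W (Suc (Suc m)) P s)" .
  then show ?case using Suc.IH[OF Suc.prems]
    by (simp add: sc_add sc_sc mult.commute)
qed


lemma cinner_adj: "cinner ((A::complex^'n^'n) *v x) y = cinner x (adjoint A *v y)"
  unfolding cinner_def matrix_vector_mult_def
  by (simp add: sum_distrib_left sum_distrib_right mult_ac) (rule sum.swap)

lemma inner_cinner: "inner (x::complex^'n) y = Re (cinner x y)"
  unfolding inner_vec_def cinner_def by (simp add: inner_complex_def Re_sum)

lemma norm_sq_cinner: "(norm (x::complex^'n))\<^sup>2 = Re (cinner x x)"
  by (simp add: power2_norm_eq_inner inner_cinner)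

lemma spec_norm_adjoint: "spec_norm (adjoint (A::complex^'n^'n)) \<le> spec_norm A"
  unfolding spec_norm_def
proof (rule onorm_le)
  fix x :: "complex^'n"
  let ?y = "adjoint A *v x"
  have "(norm ?y)\<^sup>2 = Re (cinner ?y ?y)" by (rule norm_sq_cinner)
  also have "\<dots> = Re (cinner x (A *v ?y))"
    using cinner_adj[of "adjoint A" x ?y] by (simp add: adjoint_adjoint)
  also have "\<dots> = inner x (A *v ?y)" by (simp add: inner_cinner)
  also have "\<dots> \<le> norm x * norm (A *v ?y)" by (rule norm_cauchy_schwarz)
  also have "\<dots> \<le> norm x * (onorm ((*v) A) * norm ?y)"
    by (intro mult_left_mono onorm[OF bl_mv]) simp
  finally have *: "(norm ?y)\<^sup>2 \<le> onorm ((*v) A) * norm x * norm ?y" by (simp add: mult_ac)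
  show "norm ?y \<le> onorm ((*v) A) * norm x"
  proof (cases "norm ?y = 0")
    case True
    then show ?thesis using onorm_pos_le[OF bl_mv[of A]] by simp
  next
    case False
    then have "norm ?y > 0" by simp
    with * show ?thesis by (simp add: power2_eq_square)
  qed
qed

lemma unitary_norm_vec:
  assumes "adjoint U ** U = mat 1"
  shows "norm ((U::complex^'n^'n) *v x) = norm x"
proof -
  have "(norm (U *v x))\<^sup>2 = Re (cinner (U *v x) (U *v x))" by (rule norm_sq_cinner)
  also have "\<dots> = Re (cinner x x)" by (simp add: cinner_adj matrix_vector_mul_assoc assms)
  also have "\<dots> = (norm x)\<^sup>2" by (simp add: norm_sq_cinner)
  finally show ?thesis by simp
qed

lemma unitary_spec_norm:
  assumes "adjoint U ** U = mat 1"
  shows "spec_norm (U::complex^'n^'n) \<le> 1"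
  unfolding spec_norm_def by (rule onorm_le) (simp add: unitary_norm_vec[OF assms])

lemma trace_bound_entries:
  "cmod (trace ((R::complex^'n^'n) ** X)) \<le> (\<Sum>i\<in>UNIV. \<Sum>j\<in>UNIV. cmod (R $ i $ j)) * spec_norm X"
proof -
  have "cmod (trace (R ** X)) = cmod (\<Sum>i\<in>UNIV. \<Sum>j\<in>UNIV. R $ i $ j * X $ j $ i)"
    by (simp add: trace_def matrix_matrix_mult_def)
  also have "\<dots> \<le> (\<Sum>i\<in>UNIV. cmod (\<Sum>j\<in>UNIV. R $ i $ j * X $ j $ i))" by (rule norm_sum)
  also have "\<dots> \<le> (\<Sum>i\<in>UNIV. \<Sum>j\<in>UNIV. cmod (R $ i $ j) * spec_norm X)"
    by (intro sum_mono order.trans[OF norm_sum]) (simp add: norm_mult mult_left_mono entry_le_spec_norm)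
  finally show ?thesis by (simp add: sum_distrib_right)
qed

lemma trace_form_columns:
  "trace (adjoint X ** (R::complex^'n^'n) ** X) = (\<Sum>j\<in>UNIV. cinner (column j X) (R *v column j X))"
  unfolding trace_def cinner_def matrix_matrix_mult_def matrix_vector_mult_def column_def
  apply (simp add: sum_distrib_left sum_distrib_right mult_ac)
  apply (rule sum.cong[OF refl])
  by (rule sum.swap)

lemma herm_cinner_real:
  assumes "hermitian R"
  shows "Im (cinner x ((R::complex^'n^'n) *v x)) = 0"
proof -
  have "cinner x (R *v x) = cinner (R *v x) x"
    using cinner_adj[of R x x] assms by (simp add: hermitian_def)
  also have "\<dots> = cnj (cinner x (R *v x))" by (simp add: cinner_def mult.commute)
  finally show ?thesis by (metis Reals_cnj_iff complex_is_Real_iff)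
qed

lemma tr_adj: "tr (adj X) = cnj (tr X)" by transfer (simp add: trace_def)

lemma adj_sc: "adj (sc z X) = sc (cnj z) (adj X)" by transfer (rule adjoint_cmat_scale)

definition bf :: "'n::finite sqm \<Rightarrow> 'n sqm \<Rightarrow> 'n sqm \<Rightarrow> complex" where
  "bf rho X Y = tr (adj X * rho * Y)"

lemma bf_pos:
  assumes "density_matrix R"
  shows "bf (Abs_sqm R) X X = complex_of_real (Re (bf (Abs_sqm R) X X)) \<and> Re (bf (Abs_sqm R) X X) \<ge> 0"
proof -
  have eq: "bf (Abs_sqm R) X X = (\<Sum>j\<in>UNIV. cinner (column j (Rep_sqm X)) (R *v column j (Rep_sqm X)))"
    unfolding bf_def by (simp add: tr.rep_eq adj.rep_eq times_sqm.rep_eq Abs_sqm_inverse trace_form_columns)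
  have herm: "hermitian R" and pos: "\<forall>x. Re (cinner x (R *v x)) \<ge> 0"
    using assms by (auto simp: density_matrix_def)
  have "Im (bf (Abs_sqm R) X X) = 0"
    unfolding eq by (simp add: Im_sum herm_cinner_real[OF herm])
  moreover have "Re (bf (Abs_sqm R) X X) \<ge> 0"
    unfolding eq by (simp add: Re_sum sum_nonneg pos)
  ultimately show ?thesis by (simp add: complex_eq_iff)
qed

lemma bf_sym:
  assumes "adj rho = rho"
  shows "bf rho Y X = cnj (bf rho X Y)"
proof -
  have "adj (adj X * rho * Y) = adj Y * rho * X"
    by (simp add: adj_mult adj_adj assms mult.assoc)
  then show ?thesis unfolding bf_def by (metis tr_adj)
qed

lemma bf_expand:
  "bf rho (X - sc z Y) (X - sc z Y) = bf rho X X - z * bf rho X Y - cnj z * bf rho Y X + cnj z * z * bf rho Y Y"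
  unfolding bf_def
  by (simp add: adj_diff adj_sc algebra_simps sc_mult_left sc_mult_right sc_sc tr_diff tr_add tr_sc)

lemma quad_lemma:
  fixes a q c :: real
  assumes "\<And>s. 0 \<le> a - 2 * s * q + s\<^sup>2 * q * c" "q \<ge> 0" "c \<ge> 0" "a \<ge> 0"
  shows "q \<le> a * c"
proof (cases "q = 0")
  case True
  then show ?thesis using assms by simp
next
  case False
  then have q: "q > 0" using assms by simp
  show ?thesis
  proof (cases "c = 0")
    case True
    have "0 \<le> a - 2 * ((a + 1) / (2 * q)) * q" using assms(1)[of "(a+1)/(2*q)"] True by simp
    also have "\<dots> = -1" using q by (simp add: field_simps)
    finally show ?thesis by simp
  next
    case False
    then have c: "c > 0" using assms by simp
    have "0 \<le> a - 2 * (1 / c) * q + (1/c)\<^sup>2 * q * c" by (rule assms(1))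
    also have "\<dots> = (a * c - q) / c" using c by (simp add: field_simps power2_eq_square)
    finally show ?thesis using c by (simp add: divide_nonneg_pos zero_le_divide_iff)
  qed
qed

lemma bf_cs:
  assumes "density_matrix R"
  shows "(cmod (bf (Abs_sqm R) X Y))\<^sup>2 \<le> Re (bf (Abs_sqm R) X X) * Re (bf (Abs_sqm R) Y Y)"
proof -
  let ?r = "Abs_sqm R"
  have herm: "adj ?r = ?r"
    using assms by (simp add: density_matrix_def hermitian_def adj_def Abs_sqm_inverse)
  let ?b = "bf ?r X Y"
  have pX: "bf ?r X X = of_real (Re (bf ?r X X))" "Re (bf ?r X X) \<ge> 0" using bf_pos[OF assms] by auto
  have pY: "bf ?r Y Y = of_real (Re (bf ?r Y Y))" "Re (bf ?r Y Y) \<ge> 0" using bf_pos[OF assms] by auto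
  show ?thesis
  proof (rule quad_lemma)
    fix s :: real
    let ?z = "complex_of_real s * cnj ?b"
    have "0 \<le> Re (bf ?r (X - sc ?z Y) (X - sc ?z Y))" using bf_pos[OF assms] by auto
    also have "bf ?r (X - sc ?z Y) (X - sc ?z Y) = bf ?r X X - ?z * ?b - cnj ?z * cnj ?b + cnj ?z * ?z * bf ?r Y Y"
      by (simp add: bf_expand bf_sym[OF herm, of Y X])
    also have "Re \<dots> = Re (bf ?r X X) - 2 * s * (cmod ?b)\<^sup>2 + s\<^sup>2 * (cmod ?b)\<^sup>2 * Re (bf ?r Y Y)"
    proof -
      have nb: "?b * cnj ?b = of_real ((cmod ?b)\<^sup>2)" by (rule complex_norm_square[symmetric])
      have a: "?z * ?b = of_real (s * (cmod ?b)\<^sup>2)"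
      proof -
        have "?z * ?b = of_real s * (?b * cnj ?b)" by (simp add: mult_ac)
        then show ?thesis by (simp only: nb of_real_mult)
      qed
      have b: "cnj ?z * cnj ?b = of_real (s * (cmod ?b)\<^sup>2)"
      proof -
        have "cnj ?z * cnj ?b = of_real s * (?b * cnj ?b)" by (simp add: mult_ac)
        then show ?thesis by (simp only: nb of_real_mult)
      qed
      have c: "cnj ?z * ?z = of_real (s\<^sup>2 * (cmod ?b)\<^sup>2)"
      proof -
        have "cnj ?z * ?z = of_real (s\<^sup>2) * (?b * cnj ?b)" by (simp add: mult_ac power2_eq_square)
        then show ?thesis by (simp only: nb of_real_mult)
      qed
      show ?thesis
        by (subst pY(1), simp only: a b c, simp add: power2_eq_square)
    qed
    finally show "0 \<le> Re (bf ?r X X) - 2 * s * (cmod ?b)\<^sup>2 + s\<^sup>2 * (cmod ?b)\<^sup>2 * Re (bf ?r Y Y)" .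
  qed (use pX pY in auto)
qed


lemma tr_cyc: "tr (A * (B * C)) = tr (B * (C * A))"
  by (metis tr_mult_sym mult.assoc)

lemma norm_adj_le: "norm (adj X) \<le> norm X"
  by transfer (rule spec_norm_adjoint)

lemma unitary_norm: "adj U * U = 1 \<Longrightarrow> norm U \<le> 1"
  by transfer (rule unitary_spec_norm)

lemma tr_rho_bound:
  "cmod (tr (Abs_sqm R * X)) \<le> (\<Sum>i\<in>UNIV. \<Sum>j\<in>UNIV. cmod (R $ i $ j)) * norm X"
  by (simp add: tr.rep_eq times_sqm.rep_eq norm_sqm.rep_eq Abs_sqm_inverse trace_bound_entries)

lemma density_facts:
  assumes "density_matrix R"
  shows "adj (Abs_sqm R) = Abs_sqm R" "tr (Abs_sqm R) = 1"
  using assms by (simp_all add: density_matrix_def hermitian_def adj_def tr_def Abs_sqm_inverse)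

lemma cs_one:
  assumes "density_matrix R"
  shows "(cmod (tr (Abs_sqm R * C)))\<^sup>2 \<le> Re (tr (Abs_sqm R * (C * adj C)))"
proof -
  let ?r = "Abs_sqm R"
  have "(cmod (bf ?r 1 C))\<^sup>2 \<le> Re (bf ?r 1 1) * Re (bf ?r C C)" by (rule bf_cs[OF assms])
  moreover have "bf ?r 1 C = tr (?r * C)" by (simp add: bf_def adj_one)
  moreover have "bf ?r 1 1 = 1" by (simp add: bf_def adj_one density_facts[OF assms])
  moreover have "bf ?r C C = tr (?r * (C * adj C))" unfolding bf_def by (metis tr_cyc mult.assoc)
  ultimately show ?thesis by simp
qed

lemma power_iter:
  assumes "density_matrix R" "adj D = D"
  shows "(cmod (tr (Abs_sqm R * D))) ^ (2 ^ m) \<le> cmod (tr (Abs_sqm R * D ^ (2 ^ m)))"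
proof (induction m)
  case 0
  then show ?case by simp
next
  case (Suc m)
  let ?r = "Abs_sqm R"
  have "(cmod (tr (?r * D))) ^ (2 ^ Suc m) = ((cmod (tr (?r * D))) ^ (2 ^ m))\<^sup>2"
    by (simp add: power_mult[symmetric] mult.commute)
  also have "\<dots> \<le> (cmod (tr (?r * D ^ (2 ^ m))))\<^sup>2"
    by (intro power_mono Suc.IH) simp
  also have "\<dots> \<le> Re (tr (?r * (D ^ (2 ^ m) * adj (D ^ (2 ^ m)))))" by (rule cs_one[OF assms(1)])
  also have "D ^ (2 ^ m) * adj (D ^ (2 ^ m)) = D ^ (2 ^ Suc m)"
    by (simp add: adj_power assms(2) power_add[symmetric] mult_2)
  also have "Re (tr (?r * D ^ (2 ^ Suc m))) \<le> cmod (tr (?r * D ^ (2 ^ Suc m)))" by (rule complex_Re_le_cmod)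
  finally show ?case .
qed

lemma bernoulli_real: "(q::real) \<ge> 1 \<Longrightarrow> 1 + real n * (q - 1) \<le> q ^ n"
proof (induction n)
  case 0
  then show ?case by simp
next
  case (Suc n)
  have e: "real (Suc n) * (q - 1) = real n * (q - 1) + (q - 1)" by (simp add: algebra_simps)
  have "1 + real (Suc n) * (q - 1) \<le> q ^ n + (q - 1)" using Suc.IH Suc.prems unfolding e by linarith
  also have "\<dots> \<le> q ^ n + q ^ n * (q - 1)"
    using Suc.prems by (intro add_left_mono) (simp add: one_le_power mult_le_cancel_right1)
  also have "\<dots> = q ^ Suc n" by (simp add: algebra_simps)
  finally show ?case .
qed

lemma pow2_limit_lemma:
  fixes x y K :: real
  assumes "x \<ge> 0" "y \<ge> 0" "\<And>m. x ^ (2 ^ m) \<le> K * y ^ (2 ^ m)"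
  shows "x \<le> y"
proof (rule ccontr)
  assume "\<not> x \<le> y"
  then have xy: "x > y" by simp
  show False
  proof (cases "y = 0")
    case True
    then show False using assms(3)[of 0] xy by simp
  next
    case False
    then have y: "y > 0" using assms by simp
    define q where "q = x / y"
    have q: "q > 1" using xy y by (simp add: q_def)
    obtain m :: nat where m: "real m > K / (q - 1)" using reals_Archimedean2 by blast
    have "1 + real m * (q - 1) \<le> 1 + real (2 ^ m) * (q - 1)"
    proof -
      have "real m \<le> real (2 ^ m)" by (simp del: of_nat_power add: less_imp_le[OF less_exp])
      then show ?thesis using q by (simp add: mult_right_mono)
    qed
    also have "\<dots> \<le> q ^ (2 ^ m)" by (rule bernoulli_real) (use q in simp)
    also have "q ^ (2 ^ m) = x ^ (2 ^ m) / y ^ (2 ^ m)" by (simp add: q_def power_divide)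
    also have "\<dots> \<le> K" using assms(3)[of m] y by (simp add: divide_le_eq)
    finally have "real m * (q - 1) < K" by simp
    moreover have "K < real m * (q - 1)" using m q by (simp add: divide_less_eq)
    ultimately show False by simp
  qed
qed

lemma herm_duality:
  assumes "density_matrix R" "adj D = D"
  shows "cmod (tr (Abs_sqm R * D)) \<le> norm D"
proof (rule pow2_limit_lemma[where K="\<Sum>i\<in>UNIV. \<Sum>j\<in>UNIV. cmod (R $ i $ j)"])
  fix m
  have "(cmod (tr (Abs_sqm R * D))) ^ (2 ^ m) \<le> cmod (tr (Abs_sqm R * D ^ (2 ^ m)))"
    by (rule power_iter[OF assms])
  also have "\<dots> \<le> (\<Sum>i\<in>UNIV. \<Sum>j\<in>UNIV. cmod (R $ i $ j)) * norm (D ^ (2 ^ m))" by (rule tr_rho_bound)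
  also have "\<dots> \<le> (\<Sum>i\<in>UNIV. \<Sum>j\<in>UNIV. cmod (R $ i $ j)) * norm D ^ (2 ^ m)"
    by (intro mult_left_mono norm_power_ineq sum_nonneg) auto
  finally show "(cmod (tr (Abs_sqm R * D))) ^ (2 ^ m) \<le> (\<Sum>i\<in>UNIV. \<Sum>j\<in>UNIV. cmod (R $ i $ j)) * norm D ^ (2 ^ m)" .
qed auto

lemma duality:
  assumes "density_matrix R"
  shows "cmod (tr (C * Abs_sqm R)) \<le> norm C"
proof -
  let ?r = "Abs_sqm R"
  have "(cmod (tr (?r * C)))\<^sup>2 \<le> Re (tr (?r * (C * adj C)))" by (rule cs_one[OF assms])
  also have "\<dots> \<le> cmod (tr (?r * (C * adj C)))" by (rule complex_Re_le_cmod)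
  also have "\<dots> \<le> norm (C * adj C)" by (rule herm_duality[OF assms]) (simp add: adj_mult adj_adj)
  also have "\<dots> \<le> norm C * norm (adj C)" by (rule norm_mult_ineq)
  also have "\<dots> \<le> norm C * norm C" by (intro mult_left_mono norm_adj_le) simp
  finally have "(cmod (tr (C * ?r)))\<^sup>2 \<le> (norm C)\<^sup>2" by (simp add: tr_mult_sym power2_eq_square)
  then show ?thesis by (rule power2_le_imp_le) simp
qed

lemma conj_duality:
  assumes "density_matrix R" "adj W * W = 1" "W * adj W = 1"
  shows "cmod (tr (C * (W * Abs_sqm R * adj W))) \<le> norm C"
proof -
  have "tr (C * (W * Abs_sqm R * adj W)) = tr ((adj W * C * W) * Abs_sqm R)"
    by (metis tr_cyc mult.assoc)
  then have "cmod (tr (C * (W * Abs_sqm R * adj W))) \<le> norm (adj W * C * W)"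
    using duality[OF assms(1)] by simp
  also have "\<dots> \<le> norm (adj W) * norm C * norm W"
    by (metis norm_mult_ineq mult_right_mono norm_ge_zero order.trans)
  also have "\<dots> \<le> 1 * norm C * 1"
  proof -
    have "norm (adj W) \<le> 1" using assms(3) by (intro unitary_norm) (simp add: adj_adj)
    moreover have "norm W \<le> 1" using assms(2) by (rule unitary_norm)
    ultimately show ?thesis by (intro mult_mono) auto
  qed
  finally show ?thesis by simp
qed


lemma tr_comm_move: "tr (C * (A * N - N * A)) = tr ((C * A - A * C) * N)"
proof -
  have "tr (C * (N * A)) = tr (A * C * N)" by (metis tr_mult_sym mult.assoc)
  then show ?thesis by (simp add: algebra_simps tr_diff)
qed

lemma continuous_on_trC [continuous_intros]:
  "continuous_on S f \<Longrightarrow> continuous_on S (\<lambda>x. tr (C * f x))"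
  using bounded_linear.continuous_on[OF bounded_linear_trC] by blast

lemma simplex_Q:
  assumes W: "continuous_on UNIV W"
    and NC0: "NC [] = rho" and NCs: "\<And>\<tau> ts. NC (\<tau> # ts) = W \<tau> * NC ts - NC ts * W \<tau>"
  shows "s \<in> {0..t} \<Longrightarrow> simplex_int k s (\<lambda>ts. tr (C * NC ts)) = tr (C * Q W k (\<lambda>_. rho) s)"
proof (induction k arbitrary: s C)
  case 0
  then show ?case by (simp add: NC0)
next
  case (Suc k)
  let ?g = "\<lambda>\<tau>. W \<tau> * Q W k (\<lambda>_. rho) \<tau> - Q W k (\<lambda>_. rho) \<tau> * W \<tau>"
  have cg: "continuous_on {0..t} ?g"
    using Q_cont[OF W, of t "\<lambda>_. rho" k] continuous_on_subset[OF W] by (intro continuous_intros; auto)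
  have "simplex_int (Suc k) s (\<lambda>ts. tr (C * NC ts))
      = integral {0..s} (\<lambda>\<tau>. simplex_int k \<tau> (\<lambda>ts. tr (C * NC (\<tau> # ts))))" by simp
  also have "\<dots> = integral {0..s} ((\<lambda>X. tr (C * X)) \<circ> ?g)"
  proof (rule integral_cong)
    fix \<tau> assume \<tau>: "\<tau> \<in> {0..s}"
    then have \<tau>t: "\<tau> \<in> {0..t}" using Suc.prems by auto
    have "(\<lambda>ts. tr (C * NC (\<tau> # ts))) = (\<lambda>ts. tr ((C * W \<tau> - W \<tau> * C) * NC ts))"
      by (rule ext) (simp add: NCs tr_comm_move)
    then have "simplex_int k \<tau> (\<lambda>ts. tr (C * NC (\<tau> # ts))) = tr ((C * W \<tau> - W \<tau> * C) * Q W k (\<lambda>_. rho) \<tau>)"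
      using Suc.IH[OF \<tau>t] by simp
    also have "\<dots> = tr (C * ?g \<tau>)" by (simp add: tr_comm_move)
    finally show "simplex_int k \<tau> (\<lambda>ts. tr (C * NC (\<tau> # ts))) = ((\<lambda>X. tr (C * X)) \<circ> ?g) \<tau>" by simp
  qed
  also have "\<dots> = tr (C * integral {0..s} ?g)"
    by (rule integral_linear[OF integrable_sub[OF cg Suc.prems] bounded_linear_trC])
  finally show ?case by simp
qed

lemma integral_poly:
  assumes "s \<ge> 0"
  shows "integral {0..s} (\<lambda>\<tau>::real. K * \<tau> ^ k) = K * s ^ Suc k / real (Suc k)"
proof -
  have "((\<lambda>\<tau>. K * \<tau> ^ k) has_integral (K * s ^ Suc k / real (Suc k) - K * 0 ^ Suc k / real (Suc k))) {0..s}"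
  proof (rule fundamental_theorem_of_calculus[OF assms])
    fix x :: real
    show "((\<lambda>\<tau>. K * \<tau> ^ Suc k / real (Suc k)) has_vector_derivative K * x ^ k) (at x within {0..s})"
      unfolding has_real_derivative_iff_has_vector_derivative[symmetric]
      by (rule derivative_eq_intros refl | simp)+
  qed
  then have "((\<lambda>\<tau>. K * \<tau> ^ k) has_integral (K * s ^ Suc k / real (Suc k))) {0..s}" by simp
  then show ?thesis by (rule integral_unique)
qed

lemma Q_bound:
  assumes W: "continuous_on UNIV W" and Wn: "\<And>\<tau>. norm (W \<tau>) \<le> nv"
    and X: "continuous_on {0..t} X" and M: "M \<ge> 0"
    and XB: "\<And>\<tau> C. \<tau> \<in> {0..t} \<Longrightarrow> cmod (tr (C * X \<tau>)) \<le> norm C * M"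
  shows "s \<in> {0..t} \<Longrightarrow> cmod (tr (C * Q W k X s)) \<le> norm C * (M * (2 * nv) ^ k / fact k) * s ^ k"
proof (induction k arbitrary: s C)
  case 0
  then show ?case using XB by simp
next
  case (Suc k)
  have nv: "nv \<ge> 0" using Wn[of 0] norm_ge_zero order.trans by blast
  define Kk where "Kk = M * (2 * nv) ^ k / fact k"
  have Kk: "Kk \<ge> 0" unfolding Kk_def using M nv by simp
  let ?g = "\<lambda>\<tau>. W \<tau> * Q W k X \<tau> - Q W k X \<tau> * W \<tau>"
  have cQ: "continuous_on {0..t} (Q W k X)" by (rule Q_cont[OF W X])
  have cg: "continuous_on {0..t} ?g"
    using cQ continuous_on_subset[OF W] by (intro continuous_intros; auto)
  have "tr (C * Q W (Suc k) X s) = tr (C * integral {0..s} ?g)" by simp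
  also have "\<dots> = integral {0..s} ((\<lambda>X. tr (C * X)) \<circ> ?g)"
    by (rule integral_linear[OF integrable_sub[OF cg Suc.prems] bounded_linear_trC, symmetric])
  also have "\<dots> = integral {0..s} (\<lambda>\<tau>. tr ((C * W \<tau> - W \<tau> * C) * Q W k X \<tau>))"
    by (rule integral_cong) (simp add: tr_comm_move)
  finally have eq: "tr (C * Q W (Suc k) X s) = integral {0..s} (\<lambda>\<tau>. tr ((C * W \<tau> - W \<tau> * C) * Q W k X \<tau>))" .
  have cf: "continuous_on {0..t} (\<lambda>\<tau>. tr ((C * W \<tau> - W \<tau> * C) * Q W k X \<tau>))"
  proof -
    have "continuous_on {0..t} (\<lambda>\<tau>. (C * W \<tau> - W \<tau> * C) * Q W k X \<tau>)"
      using cQ continuous_on_subset[OF W] by (intro continuous_intros; auto)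
    then show ?thesis using bounded_linear.continuous_on[OF bounded_linear_tr] by blast
  qed
  have "cmod (integral {0..s} (\<lambda>\<tau>. tr ((C * W \<tau> - W \<tau> * C) * Q W k X \<tau>)))
      \<le> integral {0..s} (\<lambda>\<tau>. (2 * nv * norm C * Kk) * \<tau> ^ k)"
  proof (rule integral_norm_bound_integral)
    show "(\<lambda>\<tau>. tr ((C * W \<tau> - W \<tau> * C) * Q W k X \<tau>)) integrable_on {0..s}"
      by (rule integrable_sub[OF cf Suc.prems])
    show "(\<lambda>\<tau>. 2 * nv * norm C * Kk * \<tau> ^ k) integrable_on {0..s}"
      by (intro integrable_continuous_real continuous_intros)
    fix \<tau> assume \<tau>: "\<tau> \<in> {0..s}"
    then have \<tau>t: "\<tau> \<in> {0..t}" using Suc.prems by auto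
    have "cmod (tr ((C * W \<tau> - W \<tau> * C) * Q W k X \<tau>)) \<le> norm (C * W \<tau> - W \<tau> * C) * Kk * \<tau> ^ k"
      using Suc.IH[OF \<tau>t] unfolding Kk_def by simp
    also have "\<dots> \<le> (2 * nv * norm C) * Kk * \<tau> ^ k"
    proof (intro mult_right_mono)
      have "norm (C * W \<tau> - W \<tau> * C) \<le> norm (C * W \<tau>) + norm (W \<tau> * C)" by (rule norm_triangle_ineq4)
      also have "\<dots> \<le> norm C * nv + nv * norm C"
        by (intro add_mono order.trans[OF norm_mult_ineq] mult_left_mono mult_right_mono Wn) auto
      finally show "norm (C * W \<tau> - W \<tau> * C) \<le> 2 * nv * norm C" by simp
    qed (use Kk \<tau> in auto)
    finally show "norm (tr ((C * W \<tau> - W \<tau> * C) * Q W k X \<tau>)) \<le> 2 * nv * norm C * Kk * \<tau> ^ k" by simp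
  qed
  also have "\<dots> = 2 * nv * norm C * Kk * s ^ Suc k / real (Suc k)"
    by (rule integral_poly) (use Suc.prems in auto)
  also have "\<dots> = norm C * (M * (2 * nv) ^ Suc k / fact (Suc k)) * s ^ Suc k"
    unfolding Kk_def by (simp add: field_simps)
  finally show ?case using eq by simp
qed


lemma E_inv1' [simp]: "exp (- (s *\<^sub>R b)) * exp (s *\<^sub>R b) = (1::'a::{real_normed_algebra_1,banach})"
  using E_inv1[of s b] by simp

lemma E_inv2' [simp]: "exp (s *\<^sub>R b) * exp (- (s *\<^sub>R b)) = (1::'a::{real_normed_algebra_1,banach})"
  using E_inv2[of s b] by simp

lemma E_cancel1 [simp]: "exp (s *\<^sub>R b) * (exp (- (s *\<^sub>R b)) * y) = (y::'a::{real_normed_algebra_1,banach})"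
  by (simp add: mult.assoc[symmetric])

lemma E_cancel2 [simp]: "exp (- (s *\<^sub>R b)) * (exp (s *\<^sub>R b) * y) = (y::'a::{real_normed_algebra_1,banach})"
  by (simp add: mult.assoc[symmetric])

lemma tr_sum: "tr (sum f A) = (\<Sum>x\<in>A. tr (f x))"
  by (induction A rule: infinite_finite_induct) (simp_all add: tr_add tr_zero)

lemma cmat_scale_time: "cmat_scale (- \<i> * complex_of_real s) A = Rep_sqm (s *\<^sub>R Abs_sqm (cmat_scale (- \<i>) A))"
proof -
  have "Rep_sqm (s *\<^sub>R Abs_sqm (cmat_scale (- \<i>) A)) = s *\<^sub>R cmat_scale (- \<i>) A"
    by (simp add: scaleR_sqm.rep_eq Abs_sqm_inverse)
  then show ?thesis by (simp add: vec_eq_iff cmat_scale_def scaleR_conv_of_real[where 'a=complex])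
qed

lemma mexp_time: "mexp (cmat_scale (- \<i> * complex_of_real s) A) = Rep_sqm (exp (s *\<^sub>R Abs_sqm (cmat_scale (- \<i>) A)))"
  by (subst cmat_scale_time) (simp only: mexp_exp Rep_sqm_inverse)

lemma skew_vec:
  assumes "hermitian A"
  shows "adjoint (cmat_scale (- \<i>) A) = - cmat_scale (- \<i>) A"
proof -
  have "adjoint (cmat_scale (- \<i>) A) = cmat_scale \<i> A"
    using assms by (simp add: adjoint_cmat_scale hermitian_def)
  also have "\<dots> = - cmat_scale (- \<i>) A" by (simp add: vec_eq_iff cmat_scale_def)
  finally show ?thesis .
qed

lemma skew_gen:
  assumes "hermitian A"
  shows "adj (Abs_sqm (cmat_scale (- \<i>) A)) = - Abs_sqm (cmat_scale (- \<i>) A)"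
  by (simp add: adj.abs_eq uminus_sqm.abs_eq skew_vec[OF assms])

lemma herm_sum:
  assumes "hermitian H0" "hermitian V"
  shows "hermitian (H0 + cmat_scale (complex_of_real d) V)"
  using assms by (simp add: hermitian_def adjoint_add adjoint_cmat_scale)

lemma adj_Eneg: "adj b = - b \<Longrightarrow> adj (exp (s *\<^sub>R (- b))) = exp (s *\<^sub>R b)"
  using adj_E[of "- b" s] by (simp add: adj_uminus)

lemma E_unit_norm:
  assumes "adj b = - b"
  shows "norm (exp (s *\<^sub>R b)) \<le> 1" "norm (exp (s *\<^sub>R (- b))) \<le> 1"
proof -
  show "norm (exp (s *\<^sub>R b)) \<le> 1"
    by (rule unitary_norm) (simp add: adj_E[OF assms] E_inv1)
  show "norm (exp (s *\<^sub>R (- b))) \<le> 1"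
    by (rule unitary_norm) (use adj_Eneg[OF assms, of s] E_inv2[of s b] in simp)
qed

lemma VIf_norm:
  assumes "adj b0 = - b0"
  shows "norm (VIf b0 v s) \<le> norm v"
proof -
  have "norm (VIf b0 v s) \<le> norm (exp (s *\<^sub>R (- b0))) * norm v * norm (exp (s *\<^sub>R b0))"
    unfolding VIf_def by (metis norm_mult_ineq mult_right_mono norm_ge_zero order.trans)
  also have "\<dots> \<le> 1 * norm v * 1"
    using E_unit_norm[OF assms, of s] by (intro mult_mono) auto
  finally show ?thesis by simp
qed

lemma pointwise_remainder:
  fixes H0 V \<rho> Obs :: "complex^'n^'n"
  assumes H0: "hermitian H0" and V: "hermitian V" and rho: "density_matrix \<rho>" and t: "t \<ge> 0"
  shows "cmod (trace (Obs ** evolve H0 V \<rho> t \<delta>) - (\<Sum>k\<le>r. of_real (\<delta> ^ k) * dyson_coeff H0 V \<rho> Obs t k))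
         \<le> spec_norm Obs * (2 * t) ^ (r + 1) * spec_norm V ^ (r + 1) * \<bar>\<delta> ^ (r + 1)\<bar> / fact (r + 1)"
proof -
  define b0 where "b0 = Abs_sqm (cmat_scale (- \<i>) H0)"
  define b where "b = Abs_sqm (cmat_scale (- \<i>) (H0 + cmat_scale (complex_of_real \<delta>) V))"
  define v where "v = Abs_sqm V"
  define obs where "obs = Abs_sqm Obs"
  define rh where "rh = Abs_sqm \<rho>"
  define c where "c = - \<i> * complex_of_real \<delta>"
  define W where "W = VIf b0 v"
  define NC where "NC = (\<lambda>ts. Abs_sqm (nested_comm H0 V \<rho> ts))"
  define P where "P = PI b0 b rh"
  define obsI where "obsI = VIf b0 obs t"
  have sb0: "adj b0 = - b0" unfolding b0_def by (rule skew_gen[OF H0])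
  have sb: "adj b = - b" unfolding b_def by (rule skew_gen[OF herm_sum[OF H0 V]])
  have bsum: "b = b0 + sc c v"
    unfolding b_def b0_def v_def c_def
    by (simp add: Rep_sqm_inject[symmetric] plus_sqm.rep_eq sc.rep_eq Abs_sqm_inverse vec_eq_iff cmat_scale_def algebra_simps)
  have U0eq: "U0 H0 s = Rep_sqm (exp (s *\<^sub>R b0))" for s
    unfolding U0_def b0_def by (rule mexp_time)
  have adjR: "adjoint (Rep_sqm (exp (s *\<^sub>R b0))) = Rep_sqm (exp (s *\<^sub>R (- b0)))" for s
    using adj_E[OF sb0, of s] by (simp add: adj.rep_eq[symmetric])
  have adjU0: "adjoint (U0 H0 s) = Rep_sqm (exp (s *\<^sub>R (- b0)))" for s
    by (simp only: U0eq adjR)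
  have inter: "interaction H0 A s = Rep_sqm (VIf b0 (Abs_sqm A) s)" for A s
    unfolding interaction_def VIf_def
    by (simp add: adjR U0eq times_sqm.rep_eq Abs_sqm_inverse)
  have evo: "evolve H0 V \<rho> t \<delta> = Rep_sqm (exp (t *\<^sub>R b) * rh * exp (t *\<^sub>R (- b)))"
  proof -
    have "mexp (cmat_scale (- \<i> * complex_of_real t) (H0 + cmat_scale (complex_of_real \<delta>) V)) = Rep_sqm (exp (t *\<^sub>R b))"
      unfolding b_def by (rule mexp_time)
    moreover have "adjoint (Rep_sqm (exp (t *\<^sub>R b))) = Rep_sqm (exp (t *\<^sub>R (- b)))"
      using adj_E[OF sb, of t] by (simp add: adj.rep_eq[symmetric])
    ultimately show ?thesis
      unfolding evolve_def Let_def rh_def by (simp add: times_sqm.rep_eq Abs_sqm_inverse)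
  qed
  have Wc: "continuous_on UNIV W" unfolding W_def by (rule VIf_cont)
  have Wn: "norm (W \<tau>) \<le> norm v" for \<tau> unfolding W_def by (rule VIf_norm[OF sb0])
  have NC0: "NC [] = rh" by (simp add: NC_def rh_def)
  have NCs: "NC (\<tau> # ts) = W \<tau> * NC ts - NC ts * W \<tau>" for \<tau> ts
    by (simp add: NC_def W_def v_def commutator_def inter times_sqm.abs_eq[symmetric] minus_sqm.abs_eq[symmetric] Rep_sqm_inverse)
  have Pc: "continuous_on {0..t} P" unfolding P_def by (rule PI_cont)
  have duh: "P s = rh + sc c (Q W (Suc 0) P s)" if s: "s \<in> {0..t}" for s
  proof -
    let ?g = "\<lambda>\<tau>. W \<tau> * P \<tau> - P \<tau> * W \<tau>"
    have cg: "continuous_on {0..t} ?g"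
      using Pc continuous_on_subset[OF Wc] by (intro continuous_intros; auto)
    have "((sc c \<circ> ?g) has_integral (P s - P 0)) {0..s}"
      unfolding o_def W_def P_def
      by (rule fundamental_theorem_of_calculus) (use s in \<open>auto intro!: PI_deriv[OF bsum]\<close>)
    then have "integral {0..s} (sc c \<circ> ?g) = P s - rh"
      by (simp add: integral_unique P_def PI_0)
    moreover have "integral {0..s} (sc c \<circ> ?g) = sc c (integral {0..s} ?g)"
      by (rule integral_linear[OF integrable_sub[OF cg s] bounded_linear_sc])
    ultimately show ?thesis by simp
  qed
  have expn: "P t = (\<Sum>k\<le>r. sc (c ^ k) (Q W k (\<lambda>_. rh) t)) + sc (c ^ Suc r) (Q W (Suc r) P t)"
    by (rule expansion[OF Wc Pc duh]) (use t in auto)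
  have F: "trace (Obs ** evolve H0 V \<rho> t \<delta>) = tr (obsI * P t)"
  proof -
    have "trace (Obs ** evolve H0 V \<rho> t \<delta>) = tr (obs * (exp (t *\<^sub>R b) * rh * exp (t *\<^sub>R (- b))))"
      by (simp add: evo obs_def tr.rep_eq times_sqm.rep_eq Abs_sqm_inverse)
    also have "\<dots> = tr (exp (t *\<^sub>R (- b0)) * obs * exp (t *\<^sub>R b0) * (exp (t *\<^sub>R (- b0)) * exp (t *\<^sub>R b) * rh * exp (t *\<^sub>R (- b)) * exp (t *\<^sub>R b0)))"
    proof -
      have "exp (t *\<^sub>R (- b0)) * obs * exp (t *\<^sub>R b0) * (exp (t *\<^sub>R (- b0)) * exp (t *\<^sub>R b) * rh * exp (t *\<^sub>R (- b)) * exp (t *\<^sub>R b0))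
          = exp (t *\<^sub>R (- b0)) * (obs * (exp (t *\<^sub>R b0) * exp (t *\<^sub>R (- b0))) * exp (t *\<^sub>R b) * rh * exp (t *\<^sub>R (- b)) * exp (t *\<^sub>R b0))"
        by (simp add: mult.assoc)
      also have "\<dots> = exp (t *\<^sub>R (- b0)) * (obs * exp (t *\<^sub>R b) * rh * exp (t *\<^sub>R (- b)) * exp (t *\<^sub>R b0))"
        by (simp add: mult.assoc)
      finally have e: "exp (t *\<^sub>R (- b0)) * obs * exp (t *\<^sub>R b0) * (exp (t *\<^sub>R (- b0)) * exp (t *\<^sub>R b) * rh * exp (t *\<^sub>R (- b)) * exp (t *\<^sub>R b0))
          = exp (t *\<^sub>R (- b0)) * (obs * exp (t *\<^sub>R b) * rh * exp (t *\<^sub>R (- b)) * exp (t *\<^sub>R b0))" .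
      have "tr (exp (t *\<^sub>R (- b0)) * (obs * exp (t *\<^sub>R b) * rh * exp (t *\<^sub>R (- b)) * exp (t *\<^sub>R b0)))
          = tr (obs * exp (t *\<^sub>R b) * rh * exp (t *\<^sub>R (- b)) * (exp (t *\<^sub>R b0) * exp (t *\<^sub>R (- b0))))"
        by (metis tr_mult_sym mult.assoc)
      then show ?thesis unfolding e by (simp add: E_inv2 mult.assoc)
    qed
    finally show ?thesis by (simp add: obsI_def P_def VIf_def PI_def)
  qed
  have dy: "c ^ k * tr (obsI * Q W k (\<lambda>_. rh) t) = of_real (\<delta> ^ k) * dyson_coeff H0 V \<rho> Obs t k" for k
  proof (cases "k = 0")
    case True
    have "dyson_coeff H0 V \<rho> Obs t k = tr (obs * exp (t *\<^sub>R b0) * rh * exp (t *\<^sub>R (- b0)))"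
      using True by (simp add: dyson_coeff_def U0eq adjR obs_def rh_def tr.rep_eq times_sqm.rep_eq Abs_sqm_inverse)
    also have "\<dots> = tr (obsI * rh)"
      unfolding obsI_def VIf_def by (metis tr_mult_sym mult.assoc)
    finally show ?thesis using True by simp
  next
    case False
    have "simplex_int k t (\<lambda>ts. trace (interaction H0 Obs t ** nested_comm H0 V \<rho> ts)) = simplex_int k t (\<lambda>ts. tr (obsI * NC ts))"
      by (simp add: inter obsI_def obs_def NC_def tr.rep_eq times_sqm.rep_eq Abs_sqm_inverse)
    also have "\<dots> = tr (obsI * Q W k (\<lambda>_. rh) t)"
      by (rule simplex_Q[OF Wc NC0 NCs]) (use t in auto)
    finally have "dyson_coeff H0 V \<rho> Obs t k = (- \<i>) ^ k * tr (obsI * Q W k (\<lambda>_. rh) t)"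
      using False by (simp add: dyson_coeff_def)
    moreover have ck: "c ^ k = (- \<i>) ^ k * of_real (\<delta> ^ k)"
      unfolding c_def by (simp only: power_mult_distrib of_real_power)
    ultimately show ?thesis by (simp add: mult_ac)
  qed
  have diff: "trace (Obs ** evolve H0 V \<rho> t \<delta>) - (\<Sum>k\<le>r. of_real (\<delta> ^ k) * dyson_coeff H0 V \<rho> Obs t k)
      = c ^ Suc r * tr (obsI * Q W (Suc r) P t)"
  proof -
    have "tr (obsI * P t) = (\<Sum>k\<le>r. c ^ k * tr (obsI * Q W k (\<lambda>_. rh) t)) + c ^ Suc r * tr (obsI * Q W (Suc r) P t)"
      unfolding expn by (simp add: distrib_left tr_add sc_mult_right tr_sc sum_distrib_left tr_sum)
    then show ?thesis by (simp add: F dy)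
  qed
  have XB: "cmod (tr (C * P \<tau>)) \<le> norm C * 1" for \<tau> C
  proof -
    let ?U = "exp (\<tau> *\<^sub>R (- b0)) * exp (\<tau> *\<^sub>R b)"
    have adjU: "adj ?U = exp (\<tau> *\<^sub>R (- b)) * exp (\<tau> *\<^sub>R b0)"
      using adj_Eneg[OF sb0, of \<tau>] by (simp add: adj_mult adj_E[OF sb])
    have PU: "P \<tau> = ?U * rh * adj ?U" unfolding adjU by (simp add: P_def PI_def mult.assoc)
    have u1: "adj ?U * ?U = 1"
    proof -
      have "adj ?U * ?U = exp (\<tau> *\<^sub>R (- b)) * (exp (\<tau> *\<^sub>R b0) * exp (\<tau> *\<^sub>R (- b0))) * exp (\<tau> *\<^sub>R b)"
        unfolding adjU by (simp add: mult.assoc)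
      then show ?thesis by (simp add: E_inv2 E_inv1)
    qed
    have u2: "?U * adj ?U = 1"
    proof -
      have "?U * adj ?U = exp (\<tau> *\<^sub>R (- b0)) * (exp (\<tau> *\<^sub>R b) * exp (\<tau> *\<^sub>R (- b))) * exp (\<tau> *\<^sub>R b0)"
        unfolding adjU by (simp add: mult.assoc)
      then show ?thesis by (simp add: E_inv2 E_inv1)
    qed
    show ?thesis unfolding PU rh_def using conj_duality[OF rho u1 u2] by simp
  qed
  have rem: "cmod (tr (obsI * Q W (Suc r) P t)) \<le> norm obsI * (1 * (2 * norm v) ^ Suc r / fact (Suc r)) * t ^ Suc r"
    by (rule Q_bound[OF Wc Wn Pc _ XB]) (use t in auto)
  have nobs: "norm obsI \<le> norm obs" unfolding obsI_def by (rule VIf_norm[OF sb0])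
  have "cmod (trace (Obs ** evolve H0 V \<rho> t \<delta>) - (\<Sum>k\<le>r. of_real (\<delta> ^ k) * dyson_coeff H0 V \<rho> Obs t k))
      = \<bar>\<delta>\<bar> ^ Suc r * cmod (tr (obsI * Q W (Suc r) P t))"
    unfolding diff by (simp add: norm_mult norm_power c_def)
  also have "\<dots> \<le> \<bar>\<delta>\<bar> ^ Suc r * (norm obs * (1 * (2 * norm v) ^ Suc r / fact (Suc r)) * t ^ Suc r)"
    by (intro mult_left_mono order.trans[OF rem] mult_right_mono nobs) (use t in auto)
  also have "\<dots> = spec_norm Obs * (2 * t) ^ (r + 1) * spec_norm V ^ (r + 1) * \<bar>\<delta> ^ (r + 1)\<bar> / fact (r + 1)"
    by (simp add: obs_def v_def norm_sqm.abs_eq power_abs abs_mult power_mult_distrib field_simps)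
  finally show ?thesis .
qed


definition G :: "real \<Rightarrow> real" where "G x = (LBINT s=(0::real)..x. exp (- (s\<^sup>2)))"

lemma erf_G: "erf x = 2 / sqrt pi * G x" by (simp add: erf_def G_def zero_ereal_def)

lemma G_deriv: "(G has_real_derivative exp (- (x\<^sup>2))) (at x)"
proof -
  define a where "a = min x 0 - 1"
  define b where "b = max x 0 + 1"
  have "((\<lambda>u. LBINT y=(0::real)..u. exp (- (y\<^sup>2))) has_vector_derivative exp (- (x\<^sup>2))) (at x within {a..b})"
    by (rule interval_integral_FTC2) (auto simp: a_def b_def intro!: continuous_intros)
  moreover have "at x within {a..b} = at x" by (rule at_within_Icc_at) (auto simp: a_def b_def)
  moreover have "G = (\<lambda>u. LBINT y=(0::real)..u. exp (- (y\<^sup>2)))" by (rule ext) (simp add: G_def)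
  ultimately show ?thesis
    by (simp add: has_real_derivative_iff_has_vector_derivative)
qed

lemma G_0: "G 0 = 0" by (simp add: G_def)

lemma G_strict_mono: "x < y \<Longrightarrow> G x < G y"
  by (rule DERIV_pos_imp_increasing) (auto intro: G_deriv)

lemma erf_strict_mono: "x < y \<Longrightarrow> erf x < erf y"
  using G_strict_mono[of x y] by (simp add: erf_G divide_strict_right_mono)

lemma erf_0: "erf 0 = 0" by (simp add: erf_G G_0)

lemma isCont_erf: "isCont erf x"
proof -
  have "isCont G x" using G_deriv DERIV_isCont by blast
  then show ?thesis unfolding erf_G[abs_def] by (intro continuous_intros)
qed

lemma normal_half: "normal_density 0 (1 / sqrt 2) y = 1 / sqrt pi * exp (- (y\<^sup>2))"
  by (simp add: normal_density_def power_divide)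

lemma integral_sym:
  assumes "x \<ge> 0"
  shows "(LBINT y=-x..x. exp (- (y\<^sup>2))) = 2 * G x"
proof -
  have int: "interval_lebesgue_integrable lborel (min (ereal (-x)) (min (ereal (0::real)) (ereal x))) (max (ereal (-x)) (max (ereal 0) (ereal x))) (\<lambda>y. exp (- (y\<^sup>2)))"
    using assms by (simp add: min_def max_def) (rule interval_integrable_isCont, simp)
  have "(LBINT y=-x..(0::real). exp (- (y\<^sup>2))) + (LBINT y=(0::real)..x. exp (- (y\<^sup>2))) = (LBINT y=-x..x. exp (- (y\<^sup>2)))"
    by (rule interval_integral_sum[OF int])
  moreover have "(LBINT y=-x..(0::real). exp (- (y\<^sup>2))) = (LBINT y=(0::real)..x. exp (- (y\<^sup>2)))"
    using interval_integral_reflect[of "-x" 0 "\<lambda>y. exp (- (y\<^sup>2))"] by (simp add: zero_ereal_def)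
  ultimately show ?thesis by (simp add: G_def)
qed

lemma prob_normal_half:
  assumes M: "prob_space M" and Z: "distributed M lborel Z (normal_density 0 (1 / sqrt 2))" and x: "x \<ge> 0"
  shows "measure M {\<omega>\<in>space M. \<bar>Z \<omega>\<bar> \<le> x} = erf x"
proof -
  let ?f = "\<lambda>y. normal_density 0 (1 / sqrt 2) y"
  have set: "{\<omega>\<in>space M. \<bar>Z \<omega>\<bar> \<le> x} = Z -` {-x..x} \<inter> space M" by auto
  have "emeasure M (Z -` {-x..x} \<inter> space M) = (\<integral>\<^sup>+y. ennreal (?f y) * indicator {-x..x} y \<partial>lborel)"
    by (rule distributed_emeasure[OF Z]) simp
  also have "\<dots> = (\<integral>\<^sup>+y. ennreal (indicator {-x..x} y *\<^sub>R ?f y) \<partial>lborel)"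
    by (intro nn_integral_cong) (auto simp: indicator_def)
  also have "\<dots> = ennreal (LBINT y:{-x..x}. ?f y)"
    unfolding set_lebesgue_integral_def
  proof (rule nn_integral_eq_integral)
    have "set_integrable lborel {-x..x} ?f"
      by (rule borel_integrable_atLeastAtMost') (simp add: normal_density_def continuous_intros)
    then show "integrable lborel (\<lambda>y. indicator {-x..x} y *\<^sub>R ?f y)" by (simp add: set_integrable_def)
    show "AE y in lborel. 0 \<le> indicator {-x..x} y *\<^sub>R ?f y"
      by (simp add: normal_density_nonneg)
  qed
  finally have em: "emeasure M {\<omega>\<in>space M. \<bar>Z \<omega>\<bar> \<le> x} = ennreal (LBINT y:{-x..x}. ?f y)" using set by simp
  have "(LBINT y:{-x..x}. ?f y) = (LBINT y=-x..x. ?f y)"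
    using x by (simp add: interval_integral_Icc)
  also have "\<dots> = 1 / sqrt pi * (LBINT y=-x..x. exp (- (y\<^sup>2)))" by (simp add: normal_half)
  also have "\<dots> = erf x" using integral_sym[OF x] by (simp add: erf_G)
  finally have v: "(LBINT y:{-x..x}. ?f y) = erf x" .
  have "erf x \<ge> 0" using erf_0 erf_strict_mono[of 0 x] x by (cases "x = 0") auto
  then show ?thesis using em v by (simp add: measure_def)
qed


lemma strict_mono_upto:
  assumes "\<forall>i<r. (\<theta>::nat\<Rightarrow>real) i < \<theta> (Suc i)" "i < k" "k \<le> r"
  shows "\<theta> i < \<theta> k"
  using assms(2,3)
proof (induction k)
  case 0
  then show ?case by simp
next
  case (Suc k)
  then show ?case using assms(1) by (cases "i = k") (auto intro: less_trans)
qed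

lemma inj_theta:
  assumes "\<forall>i<r. (\<theta>::nat\<Rightarrow>real) i < \<theta> (Suc i)"
  shows "inj_on \<theta> {0..r}"
proof (rule inj_onI)
  fix i k assume "i \<in> {0..r}" "k \<in> {0..r}" "\<theta> i = \<theta> k"
  then show "i = k" using strict_mono_upto[OF assms, of i k] strict_mono_upto[OF assms, of k i]
    by (cases i k rule: linorder_cases) auto
qed

lemma lagrange_richardson:
  fixes \<theta> :: "nat \<Rightarrow> real" and p :: "real poly"
  assumes mono: "\<forall>i<r. \<theta> i < \<theta> (Suc i)" and deg: "degree p \<le> r"
  shows "(\<Sum>i\<le>r. richardson_coeff r \<theta> i * poly p (\<theta> i)) = poly p 0"
proof -
  have inj: "inj_on \<theta> {0..r}" by (rule inj_theta[OF mono])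
  have ne: "\<theta> i \<noteq> \<theta> k" if "i \<le> r" "k \<le> r" "i \<noteq> k" for i k
    using inj that by (auto dest: inj_onD)
  define L where "L i = (\<Prod>k\<in>{0..r} - {i}. [:- \<theta> k, 1:])" for i
  define d where "d i = (\<Prod>k\<in>{0..r} - {i}. (\<theta> i - \<theta> k))" for i
  define q where "q = (\<Sum>i\<le>r. smult (poly p (\<theta> i) / d i) (L i))"
  have dnz: "d i \<noteq> 0" if "i \<le> r" for i
    unfolding d_def using ne that by (auto simp: prod_zero_iff)
  have degL: "degree (L i) \<le> r" if "i \<le> r" for i
  proof -
    have "degree (L i) \<le> sum (degree \<circ> (\<lambda>k. [:- \<theta> k, 1:])) ({0..r} - {i})"
      unfolding L_def by (rule degree_prod_sum_le) simp
    also have "\<dots> = card ({0..r} - {i})" by simp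
    also have "\<dots> = r" using that by simp
    finally show ?thesis .
  qed
  have degq: "degree q \<le> r"
    unfolding q_def by (intro degree_sum_le) (auto intro: order.trans[OF degree_smult_le] degL)
  have polyL: "poly (L i) x = (\<Prod>k\<in>{0..r} - {i}. (x - \<theta> k))" for i x
    unfolding L_def by (simp add: poly_prod)
  have qj: "poly q (\<theta> j) = poly p (\<theta> j)" if j: "j \<le> r" for j
  proof -
    have "poly q (\<theta> j) = (\<Sum>i\<le>r. poly p (\<theta> i) / d i * poly (L i) (\<theta> j))"
      by (simp add: q_def poly_sum)
    also have "\<dots> = (\<Sum>i\<in>{j}. poly p (\<theta> i) / d i * poly (L i) (\<theta> j))"
    proof (rule sum.mono_neutral_right)
      show "\<forall>i\<in>{..r} - {j}. poly p (\<theta> i) / d i * poly (L i) (\<theta> j) = 0"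
        using j by (auto simp: polyL prod_zero_iff)
    qed (use j in auto)
    also have "\<dots> = poly p (\<theta> j)" using dnz[OF j] by (simp add: polyL d_def)
    finally show ?thesis .
  qed
  have "q = p"
  proof (rule ccontr)
    assume "q \<noteq> p"
    then have h: "q - p \<noteq> 0" by simp
    have "\<theta> ` {0..r} \<subseteq> {x. poly (q - p) x = 0}" using qj by auto
    then have "card (\<theta> ` {0..r}) \<le> card {x. poly (q - p) x = 0}"
      by (intro card_mono poly_roots_finite[OF h])
    also have "\<dots> \<le> degree (q - p)" by (rule card_poly_roots_bound[OF h])
    also have "\<dots> \<le> r" using degq deg by (intro order.trans[OF degree_diff_le_max]) auto
    finally show False using card_image[OF inj] by simp
  qed
  then have "poly p 0 = poly q 0" by (simp only:)
  also have "\<dots> = (\<Sum>i\<le>r. poly (smult (poly p (\<theta> i) / d i) (L i)) 0)"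
    unfolding q_def by (rule poly_sum)
  also have "\<dots> = (\<Sum>i\<le>r. poly p (\<theta> i) / d i * poly (L i) 0)" by (simp only: poly_smult)
  also have "\<dots> = (\<Sum>i\<le>r. poly p (\<theta> i) / d i * (\<Prod>k\<in>{0..r} - {i}. (0 - \<theta> k)))"
    by (simp only: polyL)
  also have "\<dots> = (\<Sum>i\<le>r. richardson_coeff r \<theta> i * poly p (\<theta> i))"
  proof (rule sum.cong[OF refl])
    fix i assume "i \<in> {..r}"
    have "(\<Prod>k\<in>{0..r} - {i}. (0 - \<theta> k)) / d i = (\<Prod>k\<in>{0..r} - {i}. (0 - \<theta> k) / (\<theta> i - \<theta> k))"
      unfolding d_def by (rule prod_dividef[symmetric])
    also have "\<dots> = richardson_coeff r \<theta> i"
      unfolding richardson_coeff_def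
    proof (rule prod.cong[OF refl])
      fix k
      have "\<theta> i - \<theta> k = - (\<theta> k - \<theta> i)" by simp
      then show "(0 - \<theta> k) / (\<theta> i - \<theta> k) = \<theta> k / (\<theta> k - \<theta> i)"
        by (simp only: diff_0 minus_divide_divide)
    qed
    finally have e: "(\<Prod>k\<in>{0..r} - {i}. (0 - \<theta> k)) / d i = richardson_coeff r \<theta> i" .
    have "poly p (\<theta> i) / d i * (\<Prod>k\<in>{0..r} - {i}. (0 - \<theta> k)) = ((\<Prod>k\<in>{0..r} - {i}. (0 - \<theta> k)) / d i) * poly p (\<theta> i)"
      by (simp only: divide_inverse mult_ac)
    then show "poly p (\<theta> i) / d i * (\<Prod>k\<in>{0..r} - {i}. (0 - \<theta> k)) = richardson_coeff r \<theta> i * poly p (\<theta> i)"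
      by (simp only: e)
  qed
  finally show ?thesis by simp
qed


section \<open>Evolution as a continuous function of the noise\<close>

lemma evolve_exp:
  fixes H0 V \<rho> :: "complex^'n^'n" and \<delta> t :: real
  assumes H0: "hermitian H0" and V: "hermitian V"
  defines "bd \<equiv> Abs_sqm (cmat_scale (- \<i>) (H0 + cmat_scale (complex_of_real \<delta>) V))"
  shows "evolve H0 V \<rho> t \<delta> = Rep_sqm (exp (t *\<^sub>R bd) * Abs_sqm \<rho> * exp (t *\<^sub>R (- bd)))"
proof -
  have sb: "adj bd = - bd" unfolding bd_def by (rule skew_gen[OF herm_sum[OF H0 V]])
  have "mexp (cmat_scale (- \<i> * complex_of_real t) (H0 + cmat_scale (complex_of_real \<delta>) V)) = Rep_sqm (exp (t *\<^sub>R bd))"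
    unfolding bd_def by (rule mexp_time)
  moreover have "adjoint (Rep_sqm (exp (t *\<^sub>R bd))) = Rep_sqm (exp (t *\<^sub>R (- bd)))"
    using adj_E[OF sb, of t] by (simp add: adj.rep_eq[symmetric])
  ultimately show ?thesis
    unfolding evolve_def Let_def by (simp add: times_sqm.rep_eq Abs_sqm_inverse)
qed

lemma bd_lin:
  "Abs_sqm (cmat_scale (- \<i>) (H0 + cmat_scale (complex_of_real \<delta>) V))
   = Abs_sqm (cmat_scale (- \<i>) H0) + \<delta> *\<^sub>R Abs_sqm (cmat_scale (- \<i>) V)"
  by (simp add: Rep_sqm_inject[symmetric] plus_sqm.rep_eq scaleR_sqm.rep_eq Abs_sqm_inverse
      vec_eq_iff cmat_scale_def scaleR_conv_of_real[where 'a=complex] algebra_simps)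

lemma continuous_on_Rep [continuous_intros]: "continuous_on S f \<Longrightarrow> continuous_on S (\<lambda>x. Rep_sqm (f x))"
  using bounded_linear.continuous_on[OF bounded_linear_Rep_sqm] by blast

lemma continuous_on_nth2 [continuous_intros]:
  "continuous_on S f \<Longrightarrow> continuous_on S (\<lambda>x. (f x :: complex^'n^'n) $ i $ j)"
  by (intro continuous_intros)

lemma evolve_cont:
  assumes "hermitian H0" "hermitian V"
  shows "continuous_on UNIV (\<lambda>\<delta>. evolve H0 V \<rho> t \<delta> $ i $ j)"
proof -
  have eq: "(\<lambda>\<delta>. evolve H0 V \<rho> t \<delta> $ i $ j) = (\<lambda>\<delta>. Rep_sqm (exp (t *\<^sub>R (Abs_sqm (cmat_scale (- \<i>) H0) + \<delta> *\<^sub>R Abs_sqm (cmat_scale (- \<i>) V))) * Abs_sqm \<rho> *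
        exp (t *\<^sub>R (- (Abs_sqm (cmat_scale (- \<i>) H0) + \<delta> *\<^sub>R Abs_sqm (cmat_scale (- \<i>) V))))) $ i $ j)"
    by (rule ext) (simp only: evolve_exp[OF assms] bd_lin)
  show ?thesis unfolding eq by (intro continuous_intros)
qed

lemma evolve_entry_bound:
  assumes "hermitian H0" "hermitian V"
  shows "cmod (evolve H0 V \<rho> t \<delta> $ i $ j) \<le> spec_norm \<rho>"
proof -
  define bd where "bd = Abs_sqm (cmat_scale (- \<i>) (H0 + cmat_scale (complex_of_real \<delta>) V))"
  have sb: "adj bd = - bd" unfolding bd_def by (rule skew_gen[OF herm_sum[OF assms]])
  have "cmod (evolve H0 V \<rho> t \<delta> $ i $ j) \<le> spec_norm (evolve H0 V \<rho> t \<delta>)" by (rule entry_le_spec_norm)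
  also have "\<dots> = norm (exp (t *\<^sub>R bd) * Abs_sqm \<rho> * exp (t *\<^sub>R (- bd)))"
    by (simp add: evolve_exp[OF assms] bd_def norm_sqm.rep_eq)
  also have "\<dots> \<le> norm (exp (t *\<^sub>R bd)) * norm (Abs_sqm \<rho>) * norm (exp (t *\<^sub>R (- bd)))"
    by (metis norm_mult_ineq mult_right_mono norm_ge_zero order.trans)
  also have "\<dots> \<le> 1 * norm (Abs_sqm \<rho>) * 1"
    using E_unit_norm[OF sb, of t] by (intro mult_mono) auto
  finally show ?thesis by (simp add: norm_sqm.abs_eq)
qed

lemma evolve_meas:
  assumes "hermitian H0" "hermitian V" "sets D = sets borel"
  shows "(\<lambda>\<delta>. evolve H0 V \<rho> t \<delta> $ i $ j) \<in> borel_measurable D"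
  using borel_measurable_continuous_onI[OF evolve_cont[OF assms(1,2)]] measurable_cong_sets[OF assms(3) refl]
  by blast

lemma evolve_integrable:
  assumes "hermitian H0" "hermitian V" "sets D = sets borel" "prob_space D"
  shows "integrable D (\<lambda>\<delta>. evolve H0 V \<rho> t \<delta> $ i $ j)"
proof -
  interpret prob_space D by fact
  show ?thesis
    by (rule integrable_const_bound[where B="spec_norm \<rho>"])
       (simp_all add: evolve_entry_bound[OF assms(1,2)] evolve_meas[OF assms(1-3)])
qed

lemma trace_expand: "trace ((A::complex^'n^'n) ** B) = (\<Sum>i\<in>UNIV. \<Sum>j\<in>UNIV. A $ i $ j * B $ j $ i)"
  by (simp add: trace_def matrix_matrix_mult_def)

lemma trace_avg:
  assumes "hermitian H0" "hermitian V" "sets D = sets borel" "prob_space D"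
  shows "integrable D (\<lambda>\<delta>. trace (Obs ** evolve H0 V \<rho> t \<delta>))"
    and "trace (Obs ** avg_state D H0 V \<rho> t) = (\<integral>\<delta>. trace (Obs ** evolve H0 V \<rho> t \<delta>) \<partial>D)"
proof -
  have int: "integrable D (\<lambda>\<delta>. evolve H0 V \<rho> t \<delta> $ j $ i)" for i j by (rule evolve_integrable[OF assms])
  show "integrable D (\<lambda>\<delta>. trace (Obs ** evolve H0 V \<rho> t \<delta>))"
    unfolding trace_expand using int by auto
  have "(\<integral>\<delta>. trace (Obs ** evolve H0 V \<rho> t \<delta>) \<partial>D)
      = (\<Sum>i\<in>UNIV. \<Sum>j\<in>UNIV. Obs $ i $ j * (\<integral>\<delta>. evolve H0 V \<rho> t \<delta> $ j $ i \<partial>D))"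
    unfolding trace_expand using int
    by (simp add: integral_sum integrable_sum)
  also have "\<dots> = trace (Obs ** avg_state D H0 V \<rho> t)"
    by (simp add: trace_expand avg_state_def)
  finally show "trace (Obs ** avg_state D H0 V \<rho> t) = (\<integral>\<delta>. trace (Obs ** evolve H0 V \<rho> t \<delta>) \<partial>D)" by simp
qed

lemma remainder_bound:
  fixes H0 V \<rho> Obs :: "complex^'n^'n"
  assumes H0: "hermitian H0" and V: "hermitian V" and rho: "density_matrix \<rho>" and t: "t \<ge> 0"
    and sD: "sets D = sets borel" and pD: "prob_space D"
    and intk: "\<And>k. k \<ge> 1 \<Longrightarrow> integrable D (\<lambda>\<delta>. \<delta> ^ k)"
  shows "cmod (remainder r D H0 V \<rho> Obs t)
     \<le> spec_norm Obs * (2 * t) ^ (r + 1) * spec_norm V ^ (r + 1) * (\<integral>\<delta>. \<bar>\<delta> ^ (r + 1)\<bar> \<partial>D) / fact (r + 1)"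
proof -
  interpret prob_space D by fact
  let ?F = "\<lambda>\<delta>. trace (Obs ** evolve H0 V \<rho> t \<delta>)"
  let ?a = "dyson_coeff H0 V \<rho> Obs t"
  let ?K = "spec_norm Obs * (2 * t) ^ (r + 1) * spec_norm V ^ (r + 1)"
  have ik: "integrable D (\<lambda>\<delta>. \<delta> ^ k)" for k
    using intk[of k] by (cases k) auto
  have iF: "integrable D ?F" by (rule trace_avg(1)[OF H0 V sD pD])
  have ik2: "integrable D (\<lambda>\<delta>. complex_of_real (\<delta> ^ k) * ?a k)" for k
    using ik[of k] by (intro integrable_mult_left integrable_of_real)
  have iS: "integrable D (\<lambda>\<delta>. \<Sum>k\<le>r. complex_of_real (\<delta> ^ k) * ?a k)"
    by (rule Bochner_Integration.integrable_sum) (rule ik2)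
  have "remainder r D H0 V \<rho> Obs t = (\<integral>\<delta>. ?F \<delta> \<partial>D) - (\<integral>\<delta>. (\<Sum>k\<le>r. complex_of_real (\<delta> ^ k) * ?a k) \<partial>D)"
  proof -
    have "(\<integral>\<delta>. (\<Sum>k\<le>r. complex_of_real (\<delta> ^ k) * ?a k) \<partial>D) = (\<Sum>k\<le>r. (\<integral>\<delta>. complex_of_real (\<delta> ^ k) * ?a k \<partial>D))"
      by (rule Bochner_Integration.integral_sum) (rule ik2)
    also have "\<dots> = (\<Sum>k\<le>r. complex_of_real (\<integral>\<delta>. \<delta> ^ k \<partial>D) * ?a k)"
      by (rule sum.cong[OF refl]) (subst integral_mult_left_zero, simp only: integral_complex_of_real)
    finally show ?thesis unfolding remainder_def trace_avg(2)[OF H0 V sD pD] by simp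
  qed
  also have "\<dots> = (\<integral>\<delta>. ?F \<delta> - (\<Sum>k\<le>r. complex_of_real (\<delta> ^ k) * ?a k) \<partial>D)"
    by (rule Bochner_Integration.integral_diff[OF iF iS, symmetric])
  finally have req: "remainder r D H0 V \<rho> Obs t = (\<integral>\<delta>. ?F \<delta> - (\<Sum>k\<le>r. complex_of_real (\<delta> ^ k) * ?a k) \<partial>D)" .
  have "cmod (remainder r D H0 V \<rho> Obs t) \<le> (\<integral>\<delta>. cmod (?F \<delta> - (\<Sum>k\<le>r. complex_of_real (\<delta> ^ k) * ?a k)) \<partial>D)"
    unfolding req by (rule integral_norm_bound)
  also have "\<dots> \<le> (\<integral>\<delta>. ?K * \<bar>\<delta> ^ (r + 1)\<bar> / fact (r + 1) \<partial>D)"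
  proof (rule integral_mono)
    show "integrable D (\<lambda>\<delta>. cmod (?F \<delta> - (\<Sum>k\<le>r. complex_of_real (\<delta> ^ k) * ?a k)))"
      using iF iS by auto
    show "integrable D (\<lambda>\<delta>. ?K * \<bar>\<delta> ^ (r + 1)\<bar> / fact (r + 1))"
      using ik[of "r+1"] by auto
    show "cmod (?F \<delta> - (\<Sum>k\<le>r. complex_of_real (\<delta> ^ k) * ?a k)) \<le> ?K * \<bar>\<delta> ^ (r + 1)\<bar> / fact (r + 1)" for \<delta>
      by (rule pointwise_remainder[OF H0 V rho t])
  qed
  also have "\<dots> = ?K * (\<integral>\<delta>. \<bar>\<delta> ^ (r + 1)\<bar> \<partial>D) / fact (r + 1)" by simp
  finally show ?thesis .
qed


lemma erf_inv_props:
  fixes Z :: "'a \<Rightarrow> real"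
  assumes M: "prob_space M" and Z: "distributed M lborel Z (normal_density 0 (1 / sqrt 2))"
    and e: "0 < \<epsilon>" "\<epsilon> < 1"
  shows "erf (erf_inv (1 - \<epsilon>)) = 1 - \<epsilon>" "erf_inv (1 - \<epsilon>) \<ge> 0"
proof -
  interpret prob_space M by fact
  have Zm[measurable]: "Z \<in> borel_measurable M"
    using distributed_measurable[OF Z] by simp
  define A where "A n = {\<omega>\<in>space M. \<bar>Z \<omega>\<bar> \<le> real n}" for n
  have As: "range A \<subseteq> sets M" unfolding A_def by auto
  have inc: "incseq A" unfolding A_def incseq_def by (auto intro: order.trans)
  have UN: "(\<Union>n. A n) = space M"
  proof
    show "(\<Union>n. A n) \<subseteq> space M" unfolding A_def by auto
    show "space M \<subseteq> (\<Union>n. A n)"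
    proof
      fix \<omega> assume "\<omega> \<in> space M"
      moreover obtain n :: nat where "\<bar>Z \<omega>\<bar> \<le> real n" using real_arch_simple by blast
      ultimately show "\<omega> \<in> (\<Union>n. A n)" unfolding A_def by auto
    qed
  qed
  have "(\<lambda>n. measure M (A n)) \<longlonglongrightarrow> measure M (\<Union>n. A n)"
    by (rule finite_Lim_measure_incseq[OF As inc])
  then have lim: "(\<lambda>n. measure M (A n)) \<longlonglongrightarrow> 1" using UN prob_space by simp
  have "\<forall>\<^sub>F n in sequentially. measure M (A n) > 1 - \<epsilon>"
    by (rule order_tendstoD(1)[OF lim]) (use e in simp)
  then obtain n where n: "measure M (A n) > 1 - \<epsilon>"
    by (auto simp: eventually_sequentially)
  have erfn: "erf (real n) = measure M (A n)"
    unfolding A_def by (rule prob_normal_half[OF M Z, symmetric]) simp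
  obtain x where x: "0 \<le> x" "x \<le> real n" "erf x = 1 - \<epsilon>"
    using IVT[of erf 0 "1 - \<epsilon>" "real n"] erf_0 erfn n e isCont_erf by auto
  have uniq: "y = x" if "erf y = 1 - \<epsilon>" for y
    using erf_strict_mono[of y x] erf_strict_mono[of x y] x(3) that
    by (cases y x rule: linorder_cases) auto
  have "erf_inv (1 - \<epsilon>) = x" unfolding erf_inv_def
  proof (rule the_equality)
    show "erf x = 1 - \<epsilon>" by (rule x(3))
  next
    fix y assume "erf y = 1 - \<epsilon>"
    then show "y = x" by (rule uniq)
  qed
  then show "erf (erf_inv (1 - \<epsilon>)) = 1 - \<epsilon>" "erf_inv (1 - \<epsilon>) \<ge> 0" using x(1,3) by simp_all
qed

lemma gauss_sum:
  fixes r :: nat and \<xi> :: "nat \<Rightarrow> 'a \<Rightarrow> real" and \<nu> g :: "nat \<Rightarrow> real"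
  assumes M: "prob_space M"
    and ind: "prob_space.indep_vars M (\<lambda>_. borel) \<xi> {0..r}"
    and nd: "\<forall>i\<le>r. \<nu> i > 0 \<and> distributed M lborel (\<xi> i) (normal_density 0 (\<nu> i))"
    and g: "\<exists>i\<le>r. g i \<noteq> 0" and e: "0 < \<epsilon>" "\<epsilon> < 1"
  shows "measure M {\<omega>\<in>space M. \<bar>\<Sum>i\<le>r. g i * \<xi> i \<omega>\<bar> \<le> sqrt 2 * erf_inv (1 - \<epsilon>) * (\<Sum>i\<le>r. \<bar>g i\<bar> * \<nu> i)} \<ge> 1 - \<epsilon>"
proof -
  interpret prob_space M by fact
  have \<xi>m: "\<xi> i \<in> borel_measurable M" if "i \<le> r" for i
    using distributed_measurable[of M lborel "\<xi> i"] nd that by auto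
  define I where "I = {i. i \<le> r \<and> g i \<noteq> 0}"
  have fI: "finite I" unfolding I_def by (rule finite_subset[of _ "{..r}"]) auto
  have neI: "I \<noteq> {}" using g unfolding I_def by auto
  have dI: "distributed M lborel (\<lambda>x. g i * \<xi> i x) (normal_density 0 (\<bar>g i\<bar> * \<nu> i))" if "i \<in> I" for i
  proof -
    have "distributed M lborel (\<lambda>x. 0 + g i * \<xi> i x) (normal_density (0 + g i * 0) (\<bar>g i\<bar> * \<nu> i))"
      by (rule normal_density_affine) (use nd that in \<open>auto simp: I_def\<close>)
    then show ?thesis by simp
  qed
  have indI: "indep_vars (\<lambda>i. borel) (\<lambda>i x. g i * \<xi> i x) I"
  proof -
    have "indep_vars (\<lambda>_. borel) \<xi> I" by (rule indep_vars_subset[OF ind]) (auto simp: I_def)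
    then show ?thesis by (rule indep_vars_compose2[where Y="\<lambda>i x. g i * x" and N="\<lambda>_. borel"]) simp
  qed
  define \<sigma> where "\<sigma> = sqrt (\<Sum>i\<in>I. (\<bar>g i\<bar> * \<nu> i)\<^sup>2)"
  have pos: "0 < \<bar>g i\<bar> * \<nu> i" if "i \<in> I" for i using nd that by (auto simp: I_def)
  have \<sigma>pos: "\<sigma> > 0"
  proof -
    have "0 < (\<bar>g i\<bar> * \<nu> i)\<^sup>2" if "i \<in> I" for i by (intro zero_less_power pos that)
    then show ?thesis unfolding \<sigma>_def using fI neI by (intro real_sqrt_gt_zero sum_pos) auto
  qed
  have sY: "distributed M lborel (\<lambda>x. \<Sum>i\<in>I. g i * \<xi> i x) (normal_density (\<Sum>i\<in>I. 0) \<sigma>)"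
    unfolding \<sigma>_def by (rule sum_indep_normal[OF fI neI indI pos dI])
  define Z where "Z x = 0 + (1 / (sqrt 2 * \<sigma>)) * (\<Sum>i\<in>I. g i * \<xi> i x)" for x
  have dZ: "distributed M lborel Z (normal_density 0 (1 / sqrt 2))"
  proof -
    have "distributed M lborel (\<lambda>x. 0 + (1 / (sqrt 2 * \<sigma>)) * (\<Sum>i\<in>I. g i * \<xi> i x))
        (normal_density (0 + (1 / (sqrt 2 * \<sigma>)) * (\<Sum>i\<in>I. 0)) (\<bar>1 / (sqrt 2 * \<sigma>)\<bar> * \<sigma>))"
      by (rule normal_density_affine[OF sY \<sigma>pos]) (use \<sigma>pos in simp)
    moreover have "\<bar>1 / (sqrt 2 * \<sigma>)\<bar> * \<sigma> = 1 / sqrt 2" using \<sigma>pos by simp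
    ultimately show ?thesis unfolding Z_def by simp
  qed
  let ?e = "erf_inv (1 - \<epsilon>)"
  have erfe: "erf ?e = 1 - \<epsilon>" and e0: "?e \<ge> 0" using erf_inv_props[OF M dZ e] by auto
  have pZ: "measure M {\<omega>\<in>space M. \<bar>Z \<omega>\<bar> \<le> ?e} = 1 - \<epsilon>"
    using prob_normal_half[OF M dZ e0] erfe by simp
  have sumeq: "(\<Sum>i\<le>r. g i * \<xi> i \<omega>) = (\<Sum>i\<in>I. g i * \<xi> i \<omega>)" for \<omega>
    by (rule sum.mono_neutral_right) (auto simp: I_def)
  have \<sigma>le: "\<sigma> \<le> (\<Sum>i\<le>r. \<bar>g i\<bar> * \<nu> i)"
  proof -
    have "\<sigma> = L2_set (\<lambda>i. \<bar>g i\<bar> * \<nu> i) I" by (simp add: \<sigma>_def L2_set_def)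
    also have "\<dots> \<le> (\<Sum>i\<in>I. \<bar>g i\<bar> * \<nu> i)" by (rule L2_set_le_sum) (use pos in \<open>auto intro: less_imp_le\<close>)
    also have "\<dots> \<le> (\<Sum>i\<le>r. \<bar>g i\<bar> * \<nu> i)" by (rule sum_mono2) (use nd in \<open>auto simp: I_def\<close>)
    finally show ?thesis .
  qed
  let ?S = "{\<omega>\<in>space M. \<bar>\<Sum>i\<le>r. g i * \<xi> i \<omega>\<bar> \<le> sqrt 2 * ?e * (\<Sum>i\<le>r. \<bar>g i\<bar> * \<nu> i)}"
  have sub: "{\<omega>\<in>space M. \<bar>Z \<omega>\<bar> \<le> ?e} \<subseteq> ?S"
  proof safe
    fix \<omega> assume "\<omega> \<in> space M" "\<bar>Z \<omega>\<bar> \<le> ?e"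
    then have "\<bar>\<Sum>i\<in>I. g i * \<xi> i \<omega>\<bar> / (sqrt 2 * \<sigma>) \<le> ?e"
      using \<sigma>pos by (simp add: Z_def abs_mult)
    then have "\<bar>\<Sum>i\<in>I. g i * \<xi> i \<omega>\<bar> \<le> sqrt 2 * \<sigma> * ?e"
      using \<sigma>pos by (simp add: divide_le_eq mult_ac)
    also have "\<dots> \<le> sqrt 2 * ?e * (\<Sum>i\<le>r. \<bar>g i\<bar> * \<nu> i)"
    proof -
      have "sqrt 2 * ?e * \<sigma> \<le> sqrt 2 * ?e * (\<Sum>i\<le>r. \<bar>g i\<bar> * \<nu> i)"
        by (rule mult_left_mono[OF \<sigma>le]) (use e0 in simp)
      then show ?thesis by (simp add: mult_ac)
    qed
    finally show "\<bar>\<Sum>i\<le>r. g i * \<xi> i \<omega>\<bar> \<le> sqrt 2 * ?e * (\<Sum>i\<le>r. \<bar>g i\<bar> * \<nu> i)"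
      using sumeq by simp
  qed
  have Ym[measurable]: "(\<lambda>\<omega>. \<Sum>i\<le>r. g i * \<xi> i \<omega>) \<in> borel_measurable M"
    by (intro borel_measurable_sum borel_measurable_times borel_measurable_const \<xi>m) auto
  have meas: "?S \<in> sets M" by measurable
  show ?thesis using finite_measure_mono[OF sub meas] pZ by simp
qed


theorem theorem1:
  fixes H0 V \<rho>0 Obs :: "complex^'n^'n"
    and D :: "real \<Rightarrow> real measure"
    and t \<epsilon> :: real and r :: nat
    and \<theta> \<nu> :: "nat \<Rightarrow> real"
    and M :: "'w measure" and \<xi> :: "nat \<Rightarrow> 'w \<Rightarrow> real"
  assumes "hermitian H0" and "hermitian V" and "density_matrix \<rho>0" and "hermitian Obs"
    and "t \<ge> 0"
    and "mitigable D"
    and "0 \<le> \<theta> 0" and "\<forall>i<r. \<theta> i < \<theta> (Suc i)"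
    and "prob_space M"
    and "prob_space.indep_vars M (\<lambda>_. borel) \<xi> {0..r}"
    and "\<forall>i\<le>r. \<nu> i > 0 \<and> distributed M lborel (\<xi> i) (normal_density 0 (\<nu> i))"
    and "0 < \<epsilon>" and "\<epsilon> < 1"
  shows "measure M {\<omega> \<in> space M.
            cmod ((\<Sum>i\<le>r. of_real (richardson_coeff r \<theta> i) *
                     (trace (Obs ** avg_state (D (\<theta> i)) H0 V \<rho>0 t) + of_real (\<xi> i \<omega>)))
                  - trace (Obs ** avg_state (D 0) H0 V \<rho>0 t))
            \<le> (\<Sum>i\<le>r. \<bar>richardson_coeff r \<theta> i\<bar> *
                  (cmod (remainder r (D (\<theta> i)) H0 V \<rho>0 Obs t)
                   + sqrt 2 * \<nu> i * erf_inv (1 - \<epsilon>)))} \<ge> 1 - \<epsilon>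
       \<and> (\<forall>i\<le>r. cmod (remainder r (D (\<theta> i)) H0 V \<rho>0 Obs t)
              \<le> spec_norm Obs * (2 * t) ^ (r + 1) * spec_norm V ^ (r + 1)
                 * integral\<^sup>L (D (\<theta> i)) (\<lambda>\<delta>. \<bar>\<delta> ^ (r + 1)\<bar>) / fact (r + 1))"
proof -
  note H0 = assms(1) and V = assms(2) and rho = assms(3) and t = assms(5) and mit = assms(6)
    and th0 = assms(7) and mono = assms(8) and M = assms(9) and ind = assms(10) and nd = assms(11)
    and e1 = assms(12) and e2 = assms(13)
  have md: "prob_space (D x) \<and> sets (D x) = sets borel" if "x \<ge> 0" for x
    using mit that unfolding mitigable_def by blast
  have ae0: "AE \<delta> in D 0. \<delta> = 0" using mit unfolding mitigable_def by blast
  have ik: "integrable (D x) (\<lambda>\<delta>. \<delta> ^ k)" if "k \<ge> 1" "x \<ge> 0" for k x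
    using mit that unfolding mitigable_def by blast
  have pk: "\<exists>p :: real poly. degree p \<le> k \<and> (\<forall>x\<ge>0. integral\<^sup>L (D x) (\<lambda>\<delta>. \<delta> ^ k) = poly p x)" if "k \<ge> 1" for k
    using mit that unfolding mitigable_def by blast
  have thnn: "\<theta> i \<ge> 0" if "i \<le> r" for i
  proof (cases "i = 0")
    case True then show ?thesis using th0 by simp
  next
    case False
    then have "\<theta> 0 < \<theta> i" using strict_mono_upto[OF mono, of 0 i] that by simp
    then show ?thesis using th0 by simp
  qed
  have Rb: "cmod (remainder r (D x) H0 V \<rho>0 Obs t)
      \<le> spec_norm Obs * (2 * t) ^ (r + 1) * spec_norm V ^ (r + 1) * integral\<^sup>L (D x) (\<lambda>\<delta>. \<bar>\<delta> ^ (r + 1)\<bar>) / fact (r + 1)"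
    if "x \<ge> 0" for x
    using remainder_bound[OF H0 V rho t _ _ ik[OF _ that]] md[OF that] by blast
  have R0: "remainder r (D 0) H0 V \<rho>0 Obs t = 0"
  proof -
    have "integral\<^sup>L (D 0) (\<lambda>\<delta>. \<bar>\<delta> ^ (r + 1)\<bar>) = 0"
      by (rule integral_eq_zero_AE) (use ae0 in eventually_elim, simp)
    then show ?thesis using Rb[of 0] by simp
  qed
  define \<gamma> where "\<gamma> i = richardson_coeff r \<theta> i" for i
  define m where "m k x = integral\<^sup>L (D x) (\<lambda>\<delta>. \<delta> ^ k)" for k x
  have m0: "m 0 x = 1" if "x \<ge> 0" for x
  proof -
    interpret prob_space "D x" using md[OF that] by blast
    show ?thesis by (simp add: m_def prob_space)
  qed
  have lag: "(\<Sum>i\<le>r. \<gamma> i * m k (\<theta> i)) = m k 0" if "k \<le> r" for k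
  proof (cases "k = 0")
    case True
    have "(\<Sum>i\<le>r. richardson_coeff r \<theta> i * poly 1 (\<theta> i)) = poly 1 0"
      by (rule lagrange_richardson[OF mono]) simp
    then show ?thesis using True m0 thnn by (simp add: \<gamma>_def)
  next
    case False
    then obtain p :: "real poly" where p: "degree p \<le> k" "\<forall>x\<ge>0. integral\<^sup>L (D x) (\<lambda>\<delta>. \<delta> ^ k) = poly p x"
      using pk[of k] by auto
    have "(\<Sum>i\<le>r. richardson_coeff r \<theta> i * poly p (\<theta> i)) = poly p 0"
      by (rule lagrange_richardson[OF mono]) (use p that in simp)
    moreover have "poly p (\<theta> i) = m k (\<theta> i)" if "i \<le> r" for i using p thnn[OF that] by (simp add: m_def)
    moreover have "poly p 0 = m k 0" using p by (simp add: m_def)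
    ultimately show ?thesis by (simp add: \<gamma>_def)
  qed
  have sum\<gamma>: "(\<Sum>i\<le>r. \<gamma> i) = 1" using lag[of 0] m0 thnn by simp
  have gnz: "\<exists>i\<le>r. \<gamma> i \<noteq> 0"
  proof (rule ccontr)
    assume "\<not> (\<exists>i\<le>r. \<gamma> i \<noteq> 0)"
    then have "(\<Sum>i\<le>r. \<gamma> i) = 0" by simp
    then show False using sum\<gamma> by simp
  qed
  define T where "T x = trace (Obs ** avg_state (D x) H0 V \<rho>0 t)" for x
  define a where "a k = dyson_coeff H0 V \<rho>0 Obs t k" for k
  define R where "R x = remainder r (D x) H0 V \<rho>0 Obs t" for x
  have TR: "T x = R x + (\<Sum>k\<le>r. of_real (m k x) * a k)" for x
    by (simp add: T_def R_def remainder_def m_def a_def)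
  have key: "(\<Sum>i\<le>r. of_real (\<gamma> i) * T (\<theta> i)) - T 0 = (\<Sum>i\<le>r. of_real (\<gamma> i) * R (\<theta> i))"
  proof -
    have "(\<Sum>i\<le>r. of_real (\<gamma> i) * T (\<theta> i))
        = (\<Sum>i\<le>r. of_real (\<gamma> i) * R (\<theta> i)) + (\<Sum>i\<le>r. \<Sum>k\<le>r. of_real (\<gamma> i) * (of_real (m k (\<theta> i)) * a k))"
      by (simp add: TR distrib_left sum.distrib sum_distrib_left)
    also have "(\<Sum>i\<le>r. \<Sum>k\<le>r. of_real (\<gamma> i) * (of_real (m k (\<theta> i)) * a k))
        = (\<Sum>k\<le>r. \<Sum>i\<le>r. of_real (\<gamma> i) * (of_real (m k (\<theta> i)) * a k))"
      by (rule sum.swap)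
    also have "\<dots> = (\<Sum>k\<le>r. of_real (\<Sum>i\<le>r. \<gamma> i * m k (\<theta> i)) * a k)"
      by (simp add: sum_distrib_right mult.assoc)
    also have "\<dots> = (\<Sum>k\<le>r. of_real (m k 0) * a k)"
      by (rule sum.cong[OF refl]) (simp add: lag)
    also have "\<dots> = T 0 - R 0" using TR[of 0] by simp
    finally show ?thesis using R0 by (simp add: R_def)
  qed
  define Y where "Y \<omega> = (\<Sum>i\<le>r. \<gamma> i * \<xi> i \<omega>)" for \<omega>
  define C where "C = (\<Sum>i\<le>r. of_real (\<gamma> i) * R (\<theta> i))"
  let ?e = "erf_inv (1 - \<epsilon>)"
  define B where "B = (\<Sum>i\<le>r. \<bar>\<gamma> i\<bar> * (cmod (R (\<theta> i)) + sqrt 2 * \<nu> i * ?e))"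
  have est: "(\<Sum>i\<le>r. of_real (\<gamma> i) * (T (\<theta> i) + of_real (\<xi> i \<omega>))) - T 0 = C + of_real (Y \<omega>)" for \<omega>
  proof -
    have "(\<Sum>i\<le>r. of_real (\<gamma> i) * (T (\<theta> i) + of_real (\<xi> i \<omega>)))
        = (\<Sum>i\<le>r. of_real (\<gamma> i) * T (\<theta> i)) + of_real (Y \<omega>)"
      by (simp add: distrib_left sum.distrib Y_def)
    then show ?thesis using key by (simp add: C_def)
  qed
  have Ceq: "cmod C \<le> (\<Sum>i\<le>r. \<bar>\<gamma> i\<bar> * cmod (R (\<theta> i)))"
    unfolding C_def by (rule order.trans[OF norm_sum]) (simp add: norm_mult)
  have Beq: "B = (\<Sum>i\<le>r. \<bar>\<gamma> i\<bar> * cmod (R (\<theta> i))) + sqrt 2 * ?e * (\<Sum>i\<le>r. \<bar>\<gamma> i\<bar> * \<nu> i)"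
    unfolding B_def by (simp add: distrib_left sum.distrib sum_distrib_left mult_ac)
  let ?E = "{\<omega> \<in> space M. cmod ((\<Sum>i\<le>r. of_real (\<gamma> i) * (T (\<theta> i) + of_real (\<xi> i \<omega>))) - T 0) \<le> B}"
  let ?S = "{\<omega>\<in>space M. \<bar>\<Sum>i\<le>r. \<gamma> i * \<xi> i \<omega>\<bar> \<le> sqrt 2 * ?e * (\<Sum>i\<le>r. \<bar>\<gamma> i\<bar> * \<nu> i)}"
  have Eeq: "?E = {\<omega> \<in> space M. cmod (C + of_real (Y \<omega>)) \<le> B}" by (simp add: est)
  have sub: "?S \<subseteq> ?E"
  proof
    fix \<omega> assume "\<omega> \<in> ?S"
    then have \<omega>: "\<omega> \<in> space M" "\<bar>Y \<omega>\<bar> \<le> sqrt 2 * ?e * (\<Sum>i\<le>r. \<bar>\<gamma> i\<bar> * \<nu> i)" by (auto simp: Y_def)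
    have "cmod (C + of_real (Y \<omega>)) \<le> cmod C + \<bar>Y \<omega>\<bar>"
      using norm_triangle_ineq[of C "of_real (Y \<omega>)"] by simp
    also have "\<dots> \<le> B" using Ceq \<omega>(2) Beq by simp
    finally show "\<omega> \<in> ?E" using Eeq \<omega>(1) by simp
  qed
  have \<xi>m: "\<xi> i \<in> borel_measurable M" if "i \<le> r" for i
    using distributed_measurable[of M lborel "\<xi> i"] nd that by auto
  have Ym[measurable]: "Y \<in> borel_measurable M"
    unfolding Y_def[abs_def] by (intro borel_measurable_sum borel_measurable_times borel_measurable_const \<xi>m) auto
  have Emeas: "?E \<in> sets M" unfolding Eeq by measurable
  have pS: "measure M ?S \<ge> 1 - \<epsilon>" by (rule gauss_sum[OF M ind nd gnz e1 e2])
  interpret prob_space M by (rule M)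
  have "measure M ?E \<ge> 1 - \<epsilon>" using finite_measure_mono[OF sub Emeas] pS by simp
  moreover have "\<forall>i\<le>r. cmod (remainder r (D (\<theta> i)) H0 V \<rho>0 Obs t)
              \<le> spec_norm Obs * (2 * t) ^ (r + 1) * spec_norm V ^ (r + 1)
                 * integral\<^sup>L (D (\<theta> i)) (\<lambda>\<delta>. \<bar>\<delta> ^ (r + 1)\<bar>) / fact (r + 1)"
    using Rb thnn by blast
  ultimately show ?thesis unfolding \<gamma>_def T_def B_def R_def by simp
qed

end
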